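(* Let $G$ be an abelian group and $B=\bigoplus_{i\in G}B_i$ a $G$-graded integral domain finitely generated as a $k$-algebra, where $k$ is a field of characteristic zero with $k\subseteq B_0$. Let $f$ be a cylindrical element of $B$ and $d=\deg(f)\in G$. Then there exists a nonzero homogeneous locally nilpotent derivation $D:B^{(d)}\to B^{(d)}$ such that $\ker(D)\not\subseteq B_0$ and, for some $n\ge1$, $f^n\in D(B^{(d)})\cap\ker(D)$.
   Context: $B^{(d)}=\bigoplus_{i\in\langle d\rangle}B_i$. For nonzero homogeneous $f$, $B_{(f)}$ is the degree-$0$ subring of $B_f$. A ring is a polynomial ring in one variable if it is a polynomial ring in one variable over some subring (zero ring counts). For a $G$-graded ring $B$, $f$ is cylindrical if it is nonzero and homogeneous, $\deg(f)$ has infinite order in $G$, and $B_{(f)}$ is a polynomial ring in one variable. A derivation is homogeneous if it shifts degrees by a fixed group element; locally nilpotent if every element is killed by some power of it. *)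

theory Defs
  imports "HOL-Computational_Algebra.Polynomial" "HOL-Computational_Algebra.Fraction_Field"
begin

definition is_subring :: "'a::comm_ring_1 set \<Rightarrow> bool" where
  "is_subring A \<longleftrightarrow> 0 \<in> A \<and> 1 \<in> A \<and> (\<forall>x\<in>A. \<forall>y\<in>A. x + y \<in> A \<and> x * y \<in> A) \<and> (\<forall>x\<in>A. - x \<in> A)"

definition is_subfield :: "'a::comm_ring_1 set \<Rightarrow> bool" where
  "is_subfield K \<longleftrightarrow> is_subring K \<and> (\<forall>x\<in>K. x \<noteq> 0 \<longrightarrow> (\<exists>y\<in>K. x * y = 1))"

inductive_set alg_gen :: "'a::comm_ring_1 set \<Rightarrow> 'a set \<Rightarrow> 'a set" for K S where
  base_K: "c \<in> K \<Longrightarrow> c \<in> alg_gen K S"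
| base_S: "s \<in> S \<Longrightarrow> s \<in> alg_gen K S"
| add: "x \<in> alg_gen K S \<Longrightarrow> y \<in> alg_gen K S \<Longrightarrow> x + y \<in> alg_gen K S"
| mult: "x \<in> alg_gen K S \<Longrightarrow> y \<in> alg_gen K S \<Longrightarrow> x * y \<in> alg_gen K S"

definition finitely_generated_algebra :: "'a::comm_ring_1 set \<Rightarrow> bool" where
  "finitely_generated_algebra K \<longleftrightarrow> (\<exists>S. finite S \<and> alg_gen K S = UNIV)"

definition poly_ring_one_var :: "'a::comm_ring_1 set \<Rightarrow> bool" where
  "poly_ring_one_var R \<longleftrightarrow>
     (\<exists>A t. is_subring A \<and> A \<subseteq> R \<and> t \<in> R \<and>
        R = {poly p t | p. \<forall>i. coeff p i \<in> A} \<and>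
        (\<forall>p. (\<forall>i. coeff p i \<in> A) \<longrightarrow> poly p t = 0 \<longrightarrow> p = 0))"

fun nsm :: "nat \<Rightarrow> 'g::ab_group_add \<Rightarrow> 'g" where
  "nsm 0 g = 0"
| "nsm (Suc n) g = g + nsm n g"

definition cyc :: "'g::ab_group_add \<Rightarrow> 'g set" where
  "cyc d = {nsm n d | n. True} \<union> {- nsm n d | n. True}"

definition infinite_order :: "'g::ab_group_add \<Rightarrow> bool" where
  "infinite_order d \<longleftrightarrow> (\<forall>n>0. nsm n d \<noteq> 0)"

text \<open>Bg is a G-grading of the ring (whole type 'b), B = \<Oplus>_i Bg i, with K \<subseteq> B_0.\<close>
definition is_grading :: "('g::ab_group_add \<Rightarrow> 'b::comm_ring_1 set) \<Rightarrow> bool" where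
  "is_grading Bg \<longleftrightarrow>
     (\<forall>i. 0 \<in> Bg i \<and> (\<forall>x\<in>Bg i. \<forall>y\<in>Bg i. x + y \<in> Bg i) \<and> (\<forall>x\<in>Bg i. - x \<in> Bg i)) \<and>
     (\<forall>i j. \<forall>x\<in>Bg i. \<forall>y\<in>Bg j. x * y \<in> Bg (i + j)) \<and>
     (\<forall>b. \<exists>!c. finite {i. c i \<noteq> 0} \<and> (\<forall>i. c i \<in> Bg i) \<and> b = (\<Sum>i\<in>{i. c i \<noteq> 0}. c i))"

definition homogeneous :: "('g \<Rightarrow> 'b set) \<Rightarrow> 'b \<Rightarrow> bool" where
  "homogeneous Bg b \<longleftrightarrow> (\<exists>i. b \<in> Bg i)"

definition veronese :: "('g::ab_group_add \<Rightarrow> 'b::comm_ring_1 set) \<Rightarrow> 'g \<Rightarrow> 'b set" where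
  "veronese Bg d = {b. \<exists>c. finite {i. c i \<noteq> 0} \<and> (\<forall>i. c i \<in> Bg i) \<and>
                          {i. c i \<noteq> 0} \<subseteq> cyc d \<and> b = (\<Sum>i\<in>{i. c i \<noteq> 0}. c i)}"

text \<open>Degree-0 subring B_(f) of the localization B_f, inside the fraction field
  (B is a domain): the elements a / f^n with a homogeneous of degree n*deg f.\<close>
definition deg0_loc :: "('g::ab_group_add \<Rightarrow> 'b::idom set) \<Rightarrow> 'g \<Rightarrow> 'b \<Rightarrow> 'b fract set" where
  "deg0_loc Bg d f = {Fract a (f ^ n) | a n. a \<in> Bg (nsm n d)}"

definition cylindrical :: "('g::ab_group_add \<Rightarrow> 'b::idom set) \<Rightarrow> 'b \<Rightarrow> bool" where
  "cylindrical Bg f \<longleftrightarrow> f \<noteq> 0 \<and>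
     (\<exists>d. f \<in> Bg d \<and> infinite_order d \<and> poly_ring_one_var (deg0_loc Bg d f))"

definition is_derivation_on :: "'b::comm_ring_1 set \<Rightarrow> ('b \<Rightarrow> 'b) \<Rightarrow> bool" where
  "is_derivation_on R D \<longleftrightarrow> (\<forall>x\<in>R. D x \<in> R) \<and>
     (\<forall>x\<in>R. \<forall>y\<in>R. D (x + y) = D x + D y \<and> D (x * y) = x * D y + y * D x)"

definition locally_nilpotent_on :: "'b::comm_ring_1 set \<Rightarrow> ('b \<Rightarrow> 'b) \<Rightarrow> bool" where
  "locally_nilpotent_on R D \<longleftrightarrow> (\<forall>x\<in>R. \<exists>n. (D ^^ n) x = 0)"

definition homogeneous_derivation_on ::
    "('g::ab_group_add \<Rightarrow> 'b::comm_ring_1 set) \<Rightarrow> 'b set \<Rightarrow> ('b \<Rightarrow> 'b) \<Rightarrow> bool" where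
  "homogeneous_derivation_on Bg R D \<longleftrightarrow> (\<exists>e. \<forall>i. \<forall>x\<in>Bg i \<inter> R. D x \<in> Bg (i + e))"

end

theory Submission
  imports Defs "HOL-Library.Ramsey"
begin


lemma grading_parts:
  assumes "is_grading Bg"
  shows "0 \<in> Bg i" "x \<in> Bg i \<Longrightarrow> y \<in> Bg i \<Longrightarrow> x + y \<in> Bg i" "x \<in> Bg i \<Longrightarrow> - x \<in> Bg i"
    "x \<in> Bg i \<Longrightarrow> y \<in> Bg j \<Longrightarrow> x * y \<in> Bg (i + j)"
    "\<exists>!c. finite {i. c i \<noteq> 0} \<and> (\<forall>i. c i \<in> Bg i) \<and> b = (\<Sum>i\<in>{i. c i \<noteq> 0}. c i)"
  using assms unfolding is_grading_def by blast+

locale gr =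
  fixes Bg :: "'g::ab_group_add \<Rightarrow> 'b::idom set"
  assumes grad: "is_grading Bg"
begin

lemma zero_in[simp]: "0 \<in> Bg i" using grading_parts[OF grad] by blast
lemma add_in: "x \<in> Bg i \<Longrightarrow> y \<in> Bg i \<Longrightarrow> x + y \<in> Bg i" using grading_parts[OF grad] by blast
lemma neg_in: "x \<in> Bg i \<Longrightarrow> - x \<in> Bg i" using grading_parts[OF grad] by blast
lemma diff_in: "x \<in> Bg i \<Longrightarrow> y \<in> Bg i \<Longrightarrow> x - y \<in> Bg i"
  using add_in[of x i "-y"] neg_in[of y i] by simp
lemma mult_in: "x \<in> Bg i \<Longrightarrow> y \<in> Bg j \<Longrightarrow> x * y \<in> Bg (i + j)" using grading_parts[OF grad] by blast
lemma sum_in: "(\<And>a. a \<in> A \<Longrightarrow> x a \<in> Bg i) \<Longrightarrow> sum x A \<in> Bg i"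
  by (induction A rule: infinite_finite_induct) (auto intro: add_in)

definition comp :: "'b \<Rightarrow> 'g \<Rightarrow> 'b" where
  "comp b = (THE c. finite {i. c i \<noteq> 0} \<and> (\<forall>i. c i \<in> Bg i) \<and> b = (\<Sum>i\<in>{i. c i \<noteq> 0}. c i))"

lemma comp_props: "finite {i. comp b i \<noteq> 0}" "comp b i \<in> Bg i" "b = (\<Sum>i\<in>{i. comp b i \<noteq> 0}. comp b i)"
proof -
  have ex: "\<exists>!c. finite {i. c i \<noteq> 0} \<and> (\<forall>i. c i \<in> Bg i) \<and> b = (\<Sum>i\<in>{i. c i \<noteq> 0}. c i)"
    by (rule grading_parts(5)[OF grad])
  have "finite {i. comp b i \<noteq> 0} \<and> (\<forall>i. comp b i \<in> Bg i) \<and> b = (\<Sum>i\<in>{i. comp b i \<noteq> 0}. comp b i)"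
    unfolding comp_def by (rule theI'[OF ex])
  then show "finite {i. comp b i \<noteq> 0}" "comp b i \<in> Bg i" "b = (\<Sum>i\<in>{i. comp b i \<noteq> 0}. comp b i)" by auto
qed

lemma comp_unique:
  assumes "finite {i. c i \<noteq> 0}" "\<And>i. c i \<in> Bg i" "b = (\<Sum>i\<in>{i. c i \<noteq> 0}. c i)"
  shows "comp b = c"
proof -
  have "finite {i. comp b i \<noteq> 0} \<and> (\<forall>i. comp b i \<in> Bg i) \<and> b = (\<Sum>i\<in>{i. comp b i \<noteq> 0}. comp b i)"
    using comp_props by blast
  moreover have "finite {i. c i \<noteq> 0} \<and> (\<forall>i. c i \<in> Bg i) \<and> b = (\<Sum>i\<in>{i. c i \<noteq> 0}. c i)"
    using assms by blast
  ultimately show ?thesis using grading_parts(5)[OF grad, of b] by blast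
qed

lemma sum_supp_super:
  assumes "finite J" "{i. c i \<noteq> 0} \<subseteq> J"
  shows "(\<Sum>i\<in>{i. c i \<noteq> 0}. c i) = (\<Sum>i\<in>J. c i)"
  by (rule sum.mono_neutral_left) (use assms in auto)

lemma comp_unique':
  assumes "finite J" "\<And>i. i \<notin> J \<Longrightarrow> c i = 0" "\<And>i. c i \<in> Bg i" "b = (\<Sum>i\<in>J. c i)"
  shows "comp b = c"
proof (rule comp_unique)
  show fin: "finite {i. c i \<noteq> 0}" using assms(1,2) by (metis (mono_tags, lifting) mem_Collect_eq rev_finite_subset subsetI)
  show "\<And>i. c i \<in> Bg i" by fact
  have "(\<Sum>i\<in>{i. c i \<noteq> 0}. c i) = (\<Sum>i\<in>J. c i)"
    by (rule sum_supp_super) (use assms(1,2) in auto)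
  then show "b = (\<Sum>i\<in>{i. c i \<noteq> 0}. c i)" using assms(4) by simp
qed

lemma comp_sum_super: "finite J \<Longrightarrow> {i. comp b i \<noteq> 0} \<subseteq> J \<Longrightarrow> b = (\<Sum>i\<in>J. comp b i)"
  using sum_supp_super comp_props(3) by metis

lemma comp_zero: "comp 0 = (\<lambda>i. 0)"
  by (rule comp_unique') auto

lemma comp_homog: "x \<in> Bg g \<Longrightarrow> comp x = (\<lambda>i. if i = g then x else 0)"
  by (rule comp_unique'[where J="{g}"]) auto

lemma comp_add: "comp (x + y) = (\<lambda>i. comp x i + comp y i)"
proof (rule comp_unique'[where J="{i. comp x i \<noteq> 0} \<union> {i. comp y i \<noteq> 0}"])
  let ?J = "{i. comp x i \<noteq> 0} \<union> {i. comp y i \<noteq> 0}"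
  show "finite ?J" using comp_props by auto
  show "\<And>i. i \<notin> ?J \<Longrightarrow> comp x i + comp y i = 0" by auto
  show "\<And>i. comp x i + comp y i \<in> Bg i" by (intro add_in comp_props)
  have "x = (\<Sum>i\<in>?J. comp x i)" "y = (\<Sum>i\<in>?J. comp y i)"
    using comp_sum_super comp_props(1) by auto
  then show "x + y = (\<Sum>i\<in>?J. comp x i + comp y i)" by (simp add: sum.distrib)
qed

lemma comp_neg: "comp (- x) = (\<lambda>i. - comp x i)"
proof (rule comp_unique'[where J="{i. comp x i \<noteq> 0}"])
  show "finite {i. comp x i \<noteq> 0}" using comp_props by auto
  show "\<And>i. - comp x i \<in> Bg i" by (intro neg_in comp_props)
  show "- x = (\<Sum>i\<in>{i. comp x i \<noteq> 0}. - comp x i)"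
    using comp_props(3)[of x] by (simp add: sum_negf)
qed auto

lemma comp_diff: "comp (x - y) = (\<lambda>i. comp x i - comp y i)"
  using comp_add[of x "-y"] comp_neg[of y] by simp

lemma comp_sum: "comp (sum x A) i = (\<Sum>a\<in>A. comp (x a) i)"
  by (induction A rule: infinite_finite_induct) (auto simp: comp_zero comp_add)

lemma comp_sum_list: "comp (sum_list xs) i = sum_list (map (\<lambda>x. comp x i) xs)"
  by (induction xs) (auto simp: comp_zero comp_add)

lemma all_comp_zero: "(\<And>i. comp b i = 0) \<Longrightarrow> b = 0"
  using comp_props(3)[of b] by simp

lemma comp_eq_imp_eq: "(\<And>i. comp a i = comp b i) \<Longrightarrow> a = b"
  using all_comp_zero[of "a - b"] comp_diff by simp

lemma only_comp_in: "(\<And>i. i \<noteq> g \<Longrightarrow> comp b i = 0) \<Longrightarrow> b \<in> Bg g"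
proof -
  assume h: "\<And>i. i \<noteq> g \<Longrightarrow> comp b i = 0"
  have "b = (\<Sum>i\<in>{g}. comp b i)" by (rule comp_sum_super) (use h in auto)
  then show ?thesis using comp_props(2)[of b g] by simp
qed

lemma homog_disj: "x \<in> Bg g \<Longrightarrow> x \<in> Bg h \<Longrightarrow> g \<noteq> h \<Longrightarrow> x = 0"
  using comp_homog[of x g] comp_homog[of x h] by (metis)

lemma comp_mult_homog:
  assumes "x \<in> Bg g"
  shows "comp (x * y) h = x * comp y (h - g)"
proof -
  let ?J = "{i. comp y i \<noteq> 0}"
  have fin: "finite ?J" using comp_props by auto
  have "x * y = (\<Sum>j\<in>?J. x * comp y j)"
    using comp_props(3)[of y] by (metis sum_distrib_left)
  then have "comp (x * y) h = (\<Sum>j\<in>?J. comp (x * comp y j) h)" by (simp add: comp_sum)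
  also have "\<dots> = (\<Sum>j\<in>?J. if g + j = h then x * comp y j else 0)"
    by (rule sum.cong) (auto simp: comp_homog[OF mult_in[OF assms comp_props(2)]])
  also have "\<dots> = x * comp y (h - g)"
  proof (cases "h - g \<in> ?J")
    case True
    have "(\<Sum>j\<in>?J. if g + j = h then x * comp y j else 0) = (\<Sum>j\<in>?J. if j = h - g then x * comp y j else 0)"
      by (rule sum.cong) (auto simp: algebra_simps)
    also have "\<dots> = x * comp y (h - g)" using True fin by (simp add: sum.delta)
    finally show ?thesis .
  next
    case False
    have "(\<Sum>j\<in>?J. if g + j = h then x * comp y j else 0) = (\<Sum>j\<in>?J. if j = h - g then x * comp y j else 0)"
      by (rule sum.cong) (auto simp: algebra_simps)
    also have "\<dots> = 0" using False fin by (simp add: sum.delta)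
    finally show ?thesis using False by simp
  qed
  finally show ?thesis .
qed

lemma dist_sum_zero:
  assumes "finite I" "inj_on g I" "\<And>i. i \<in> I \<Longrightarrow> x i \<in> Bg (g i)" "(\<Sum>i\<in>I. x i) = 0" "j \<in> I"
  shows "x j = 0"
proof -
  have "0 = comp (\<Sum>i\<in>I. x i) (g j)" using assms(4) comp_zero by simp
  also have "\<dots> = (\<Sum>i\<in>I. comp (x i) (g j))" by (rule comp_sum)
  also have "\<dots> = (\<Sum>i\<in>I. if i = j then x i else 0)"
  proof (rule sum.cong)
    fix i assume i: "i \<in> I"
    have c: "comp (x i) = (\<lambda>k. if k = g i then x i else 0)" by (rule comp_homog, rule assms(3)[OF i])
    show "comp (x i) (g j) = (if i = j then x i else 0)"
      using assms(2,5) i unfolding c inj_on_def by auto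
  qed simp
  also have "\<dots> = x j" using assms by simp
  finally show ?thesis by simp
qed

end


lemma subring_parts:
  assumes "is_subring S"
  shows "0 \<in> S" "1 \<in> S" "x \<in> S \<Longrightarrow> y \<in> S \<Longrightarrow> x + y \<in> S" "x \<in> S \<Longrightarrow> y \<in> S \<Longrightarrow> x * y \<in> S"
    "x \<in> S \<Longrightarrow> - x \<in> S"
  using assms unfolding is_subring_def by blast+

lemma subring_diff: "is_subring S \<Longrightarrow> x \<in> S \<Longrightarrow> y \<in> S \<Longrightarrow> x - y \<in> S"
  using subring_parts[of S] by (metis diff_conv_add_uminus)

lemma subring_sum: "is_subring S \<Longrightarrow> (\<And>i. i \<in> I \<Longrightarrow> g i \<in> S) \<Longrightarrow> sum g I \<in> S"
  by (induction I rule: infinite_finite_induct) (auto simp: subring_parts)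

lemma subring_prod: "is_subring S \<Longrightarrow> (\<And>i. i \<in> I \<Longrightarrow> g i \<in> S) \<Longrightarrow> prod g I \<in> S"
  by (induction I rule: infinite_finite_induct) (auto simp: subring_parts)

lemma subring_pow: "is_subring S \<Longrightarrow> x \<in> S \<Longrightarrow> x ^ n \<in> S"
  by (induction n) (auto simp: subring_parts)

lemma subring_of_nat: "is_subring S \<Longrightarrow> of_nat n \<in> S"
  by (induction n) (auto simp: subring_parts)

definition pover :: "'a::comm_ring_1 set \<Rightarrow> 'a poly \<Rightarrow> bool" where
  "pover S p \<longleftrightarrow> (\<forall>i. coeff p i \<in> S)"

context
  fixes S :: "'a::idom set"
  assumes sub: "is_subring S"
begin

lemma pover_0[simp]: "pover S 0" using sub by (simp add: pover_def subring_parts)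
lemma pover_const: "c \<in> S \<Longrightarrow> pover S [:c:]" using sub by (simp add: pover_def subring_parts coeff_pCons split: nat.splits)
lemma pover_1: "pover S 1" using pover_const[of 1] sub by (simp add: subring_parts one_pCons)
lemma pover_add: "pover S p \<Longrightarrow> pover S q \<Longrightarrow> pover S (p + q)"
  using sub by (simp add: pover_def subring_parts)
lemma pover_neg: "pover S p \<Longrightarrow> pover S (- p)"
  using sub by (simp add: pover_def subring_parts)
lemma pover_diff: "pover S p \<Longrightarrow> pover S q \<Longrightarrow> pover S (p - q)"
  using sub by (simp add: pover_def subring_diff)
lemma pover_mult: "pover S p \<Longrightarrow> pover S q \<Longrightarrow> pover S (p * q)"
  using sub unfolding pover_def coeff_mult by (auto intro!: subring_sum subring_parts)
lemma pover_pCons: "c \<in> S \<Longrightarrow> pover S p \<Longrightarrow> pover S (pCons c p)"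
  by (simp add: pover_def coeff_pCons split: nat.splits)
lemma pover_pCons_iff: "pover S (pCons c p) \<longleftrightarrow> c \<in> S \<and> pover S p"
  unfolding pover_def by (metis coeff_pCons_0 coeff_pCons_Suc nat.exhaust)
lemma pover_smult: "c \<in> S \<Longrightarrow> pover S p \<Longrightarrow> pover S (smult c p)"
  using sub by (simp add: pover_def subring_parts)
lemma pover_pderiv: "pover S p \<Longrightarrow> pover S (pderiv p)"
  using sub by (simp add: pover_def coeff_pderiv subring_parts subring_of_nat)
lemma pover_monom: "c \<in> S \<Longrightarrow> pover S (monom c n)"
  using sub by (simp add: pover_def coeff_monom subring_parts)
lemma pover_pow: "pover S p \<Longrightarrow> pover S (p ^ n)"
  by (induction n) (auto simp: pover_1 pover_mult)
lemma pover_map: "pover S p \<Longrightarrow> (\<And>x. x \<in> S \<Longrightarrow> g x \<in> S) \<Longrightarrow> g 0 = 0 \<Longrightarrow> pover S (map_poly g p)"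
  by (simp add: pover_def coeff_map_poly)
lemma pover_funpow: "pover S p \<Longrightarrow> (\<And>p. pover S p \<Longrightarrow> pover S (h p)) \<Longrightarrow> pover S ((h ^^ n) p)"
  by (induction n) auto

lemma poly_pover_in: "pover S p \<Longrightarrow> u \<in> S \<Longrightarrow> poly p u \<in> S"
  using sub unfolding poly_altdef pover_def by (auto intro!: subring_sum subring_parts subring_pow)

end

definition der :: "'a::comm_ring_1 set \<Rightarrow> ('a \<Rightarrow> 'a) \<Rightarrow> bool" where
  "der S \<delta> \<longleftrightarrow> (\<forall>x\<in>S. \<delta> x \<in> S) \<and> (\<forall>x\<in>S. \<forall>y\<in>S. \<delta> (x + y) = \<delta> x + \<delta> y \<and> \<delta> (x * y) = x * \<delta> y + y * \<delta> x)"

lemma der_zero: "is_subring S \<Longrightarrow> der S \<delta> \<Longrightarrow> \<delta> 0 = 0"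
proof -
  assume a: "is_subring S" "der S \<delta>"
  then have "\<delta> (0 + 0) = \<delta> 0 + \<delta> 0" unfolding der_def using subring_parts(1)[of S] by blast
  then show ?thesis by simp
qed

lemma der_one: "is_subring S \<Longrightarrow> der S \<delta> \<Longrightarrow> \<delta> (1::'a::idom) = 0"
proof -
  assume a: "is_subring S" "der S \<delta>"
  then have "\<delta> (1 * 1) = 1 * \<delta> 1 + 1 * \<delta> 1" unfolding der_def using subring_parts(2)[of S] by blast
  then have "\<delta> 1 + \<delta> 1 = \<delta> 1 + 0" by simp
  then show ?thesis by (simp only: add_left_cancel)
qed

lemma der_neg: "is_subring S \<Longrightarrow> der S \<delta> \<Longrightarrow> x \<in> S \<Longrightarrow> \<delta> (- x) = - \<delta> x"
proof -
  assume a: "is_subring S" "der S \<delta>" "x \<in> S"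
  then have "\<delta> (x + - x) = \<delta> x + \<delta> (- x)" unfolding der_def using subring_parts(5)[of S x] by blast
  then show ?thesis using der_zero[OF a(1,2)] by (simp add: eq_neg_iff_add_eq_0 add.commute)
qed

lemma der_sum: "is_subring S \<Longrightarrow> der S \<delta> \<Longrightarrow> (\<And>i. i \<in> I \<Longrightarrow> g i \<in> S) \<Longrightarrow> \<delta> (sum g I) = (\<Sum>i\<in>I. \<delta> (g i))"
proof (induction I rule: infinite_finite_induct)
  case (insert x F)
  then show ?case using subring_sum[of S F g] unfolding der_def by auto
qed (auto simp: der_zero)

lemma der_pow_zero: "is_subring (S::'a::idom set) \<Longrightarrow> der S \<delta> \<Longrightarrow> s \<in> S \<Longrightarrow> \<delta> s = 0 \<Longrightarrow> \<delta> ((s::'a::idom) ^ n) = 0"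
proof (induction n)
  case 0 then show ?case using der_one by simp
next
  case (Suc n)
  then show ?case using subring_pow[of S s n] unfolding der_def by simp
qed

lemma der_mult_const: "is_subring S \<Longrightarrow> der S \<delta> \<Longrightarrow> s \<in> S \<Longrightarrow> \<delta> s = 0 \<Longrightarrow> x \<in> S \<Longrightarrow> \<delta> (s * x) = s * \<delta> x"
  unfolding der_def by simp

lemma der_funpow_mult_const:
  assumes "is_subring (S::'a::idom set)" "der S \<delta>" "s \<in> S" "\<delta> s = 0" "x \<in> S"
  shows "((\<lambda>y. s * \<delta> y) ^^ n) x = s ^ n * (\<delta> ^^ n) x \<and> (\<delta> ^^ n) x \<in> S"
proof (induction n)
  case (Suc n)
  have inS: "(\<delta> ^^ n) x \<in> S" using Suc by blast
  have "((\<lambda>y. s * \<delta> y) ^^ Suc n) x = s * \<delta> (s ^ n * (\<delta> ^^ n) x)" using Suc by simp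
  also have "\<dots> = s * (s ^ n * \<delta> ((\<delta> ^^ n) x))"
    using assms inS subring_pow[OF assms(1,3), of n] der_pow_zero[of S \<delta> s n] unfolding der_def by simp
  finally show ?case using inS assms(2) unfolding der_def by simp
qed (use assms in simp)


locale ext =
  fixes S :: "'a::field set" and u :: 'a and \<delta> :: "'a \<Rightarrow> 'a" and c :: 'a
  assumes sub: "is_subring S" and tr: "\<And>p. pover S p \<Longrightarrow> poly p u = 0 \<Longrightarrow> p = 0"
    and dS: "der S \<delta>"
begin

definition SU where "SU = {poly p u | p. pover S p}"
definition rep where "rep z = (SOME p. pover S p \<and> z = poly p u)"
definition E where "E p = poly (map_poly \<delta> p) u"
definition dd where "dd z = E (rep z) + poly (pderiv (rep z)) u * c"

lemma d0: "\<delta> 0 = 0" by (rule der_zero[OF sub dS])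
lemma d1: "\<delta> 1 = 0" by (rule der_one[OF sub dS])
lemma dadd: "x \<in> S \<Longrightarrow> y \<in> S \<Longrightarrow> \<delta> (x + y) = \<delta> x + \<delta> y" using dS unfolding der_def by blast
lemma dmult: "x \<in> S \<Longrightarrow> y \<in> S \<Longrightarrow> \<delta> (x * y) = x * \<delta> y + y * \<delta> x" using dS unfolding der_def by blast
lemma dS_in: "x \<in> S \<Longrightarrow> \<delta> x \<in> S" using dS unfolding der_def by blast

lemma poly_inj: "pover S p \<Longrightarrow> pover S q \<Longrightarrow> poly p u = poly q u \<Longrightarrow> p = q"
  using tr[of "p - q"] pover_diff[OF sub] by auto

lemma rep: "pover S p \<Longrightarrow> rep (poly p u) = p"
proof -
  assume p: "pover S p"
  have "pover S (rep (poly p u)) \<and> poly p u = poly (rep (poly p u)) u"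
    unfolding rep_def by (rule someI[of _ p]) (use p in auto)
  then show ?thesis using poly_inj p by metis
qed

lemma dd_poly: "pover S p \<Longrightarrow> dd (poly p u) = E p + poly (pderiv p) u * c"
  by (simp add: dd_def rep)

lemma SU_I: "pover S p \<Longrightarrow> poly p u \<in> SU" unfolding SU_def by blast
lemma SU_E: "z \<in> SU \<Longrightarrow> (\<And>p. pover S p \<Longrightarrow> z = poly p u \<Longrightarrow> P) \<Longrightarrow> P" unfolding SU_def by blast

lemma SU_sub: "is_subring SU"
  unfolding is_subring_def
proof (intro conjI ballI)
  show "0 \<in> SU" using SU_I[OF pover_0[OF sub]] by simp
  show "1 \<in> SU" using SU_I[OF pover_1[OF sub]] by simp
  fix x y assume "x \<in> SU" "y \<in> SU"
  then obtain p q where pq: "pover S p" "pover S q" "x = poly p u" "y = poly q u" by (metis SU_E)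
  show "x + y \<in> SU" using SU_I[OF pover_add[OF sub pq(1,2)]] pq(3,4) by simp
  show "x * y \<in> SU" using SU_I[OF pover_mult[OF sub pq(1,2)]] pq(3,4) by simp
next
  fix x assume "x \<in> SU"
  then obtain p where "pover S p" "x = poly p u" by (metis SU_E)
  then show "- x \<in> SU" using SU_I[OF pover_neg[OF sub]] by simp
qed

lemma S_SU: "s \<in> S \<Longrightarrow> s \<in> SU"
proof -
  assume s: "s \<in> S"
  have "poly [:s:] u = s" by simp
  then show ?thesis using SU_I[OF pover_const[OF sub s]] by simp
qed

lemma XS: "pover S [:0, 1:]"
  using sub by (intro pover_pCons[OF sub] pover_const) (auto simp: subring_parts)

lemma u_SU: "u \<in> SU"
  using SU_I[OF XS] by simp

lemma map_add: "pover S p \<Longrightarrow> pover S q \<Longrightarrow> map_poly \<delta> (p + q) = map_poly \<delta> p + map_poly \<delta> q"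
  by (rule poly_eqI) (simp add: coeff_map_poly d0 dadd pover_def)

lemma map_smult: "a \<in> S \<Longrightarrow> pover S q \<Longrightarrow> map_poly \<delta> (smult a q) = smult a (map_poly \<delta> q) + smult (\<delta> a) q"
  by (rule poly_eqI) (simp add: coeff_map_poly d0 dmult pover_def)

lemma map_pCons0: "map_poly \<delta> (pCons 0 r) = pCons 0 (map_poly \<delta> r)"
  using map_poly_pCons[of \<delta> 0 r] d0 by simp

lemma E_add: "pover S p \<Longrightarrow> pover S q \<Longrightarrow> E (p + q) = E p + E q"
  by (simp add: E_def map_add)

lemma E_mult: "pover S p \<Longrightarrow> pover S q \<Longrightarrow> E (p * q) = poly p u * E q + poly q u * E p"
proof (induction p rule: pCons_induct)
  case 0
  then show ?case by (simp add: E_def)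
next
  case (pCons a p)
  have a: "a \<in> S" and p: "pover S p" using pCons.prems pover_pCons_iff[OF sub] by auto
  have IH: "E (p * q) = poly p u * E q + poly q u * E p" using pCons.IH p pCons.prems by blast
  have "E (pCons a p * q) = E (smult a q + pCons 0 (p * q))" by simp
  also have "\<dots> = E (smult a q) + E (pCons 0 (p * q))"
    by (rule E_add, rule pover_smult[OF sub a pCons.prems(2)],
        rule pover_pCons[OF sub subring_parts(1)[OF sub] pover_mult[OF sub p pCons.prems(2)]])
  also have "E (smult a q) = a * E q + \<delta> a * poly q u"
    unfolding E_def using map_smult[OF a pCons.prems(2)] by simp
  also have "E (pCons 0 (p * q)) = u * E (p * q)"
    unfolding E_def map_pCons0 by simp
  also have "E (pCons a p) = \<delta> a + u * E p"
    unfolding E_def using map_poly_pCons[of \<delta> a p] d0 by simp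
  ultimately show ?case using IH by (simp add: algebra_simps)
qed

lemma dd_der: assumes "c \<in> SU" shows "der SU dd"
  unfolding der_def
proof (intro conjI ballI)
  fix x assume "x \<in> SU"
  then obtain p where p: "pover S p" "x = poly p u" unfolding SU_def by blast
  obtain r where r: "pover S r" "c = poly r u" using assms unfolding SU_def by blast
  have "dd x = E p + poly (pderiv p) u * c" using p by (simp add: dd_poly)
  then have "dd x = poly (map_poly \<delta> p + pderiv p * r) u" using r by (simp add: E_def)
  moreover have "pover S (map_poly \<delta> p + pderiv p * r)"
    using p r by (intro pover_add[OF sub] pover_mult[OF sub] pover_pderiv[OF sub] pover_map[OF sub]) (auto simp: dS_in d0)
  ultimately show "dd x \<in> SU" unfolding SU_def by blast
next
  fix x y assume "x \<in> SU" "y \<in> SU"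
  then obtain p q where pq: "pover S p" "x = poly p u" "pover S q" "y = poly q u" unfolding SU_def by blast
  have "dd (x + y) = dd (poly (p + q) u)" using pq by simp
  also have "\<dots> = E (p + q) + poly (pderiv (p + q)) u * c" using pq by (intro dd_poly pover_add[OF sub])
  also have "\<dots> = dd x + dd y" using pq by (simp add: E_add dd_poly pderiv_add algebra_simps)
  finally show "dd (x + y) = dd x + dd y" .
  have "dd (x * y) = dd (poly (p * q) u)" using pq by simp
  also have "\<dots> = E (p * q) + poly (pderiv (p * q)) u * c" using pq by (intro dd_poly pover_mult[OF sub])
  also have "\<dots> = x * dd y + y * dd x" using pq by (simp add: E_mult dd_poly pderiv_mult algebra_simps)
  finally show "dd (x * y) = x * dd y + y * dd x" .
qed

lemma dd_S: "s \<in> S \<Longrightarrow> dd s = \<delta> s"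
proof -
  assume s: "s \<in> S"
  have "dd (poly [:s:] u) = E [:s:] + poly (pderiv [:s:]) u * c" by (rule dd_poly, rule pover_const[OF sub s])
  then show ?thesis unfolding E_def using map_poly_pCons[of \<delta> s 0] d0 by simp
qed

lemma dd_u: "dd u = c"
proof -
  have "dd (poly [:0, 1:] u) = E [:0, 1:] + poly (pderiv [:0, 1:]) u * c" by (rule dd_poly, rule XS)
  moreover have "map_poly \<delta> [:0, 1:] = 0" using map_poly_pCons[of \<delta>] d0 d1 by simp
  ultimately show ?thesis unfolding E_def by (simp add: pderiv_pCons)
qed

end


lemma funpow_zero_fix: fixes f :: "'a::zero \<Rightarrow> 'a" shows "f 0 = 0 \<Longrightarrow> (f ^^ n) 0 = 0"
  by (induction n) auto

lemma funpow_zero_ge: fixes f :: "'a::zero \<Rightarrow> 'a" shows "f 0 = 0 \<Longrightarrow> (f ^^ m) x = 0 \<Longrightarrow> m \<le> n \<Longrightarrow> (f ^^ n) x = 0"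
proof -
  assume a: "f 0 = 0" "(f ^^ m) x = 0" "m \<le> n"
  then have "(f ^^ n) x = (f ^^ (n - m)) ((f ^^ m) x)" by (metis funpow_add le_add_diff_inverse2 o_apply)
  then show ?thesis using a funpow_zero_fix by simp
qed

lemma degree_pderiv_le: "degree (pderiv (p::'a::field poly)) \<le> degree p - 1"
  by (rule degree_le) (simp add: coeff_eq_0 coeff_pderiv)

lemma pderiv_nilp: "degree (p::'a::field poly) < n \<Longrightarrow> (pderiv ^^ n) p = 0"
proof (induction n arbitrary: p)
  case 0 then show ?case by simp
next
  case (Suc m)
  have eq: "(pderiv ^^ Suc m) p = (pderiv ^^ m) (pderiv p)" by (simp add: funpow_Suc_right del: funpow.simps)
  show ?case
  proof (cases "degree p = 0")
    case True
    then have "pderiv p = 0" by (metis degree_eq_zeroE pderiv_singleton)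
    then show ?thesis using eq funpow_zero_fix[of pderiv m] by simp
  next
    case False
    then have "degree (pderiv p) < m" using degree_pderiv_le[of p] Suc.prems by linarith
    then show ?thesis using eq Suc.IH by simp
  qed
qed

context ext begin

lemma iter_c0: "c = 0 \<Longrightarrow> pover S p \<Longrightarrow> (dd ^^ n) (poly p u) = poly (map_poly (\<delta> ^^ n) p) u \<and> pover S (map_poly (\<delta> ^^ n) p)"
proof (induction n)
  case 0 then show ?case by (simp add: map_poly_idI)
next
  case (Suc n)
  have z: "(\<delta> ^^ n) 0 = 0" using funpow_zero_fix d0 by blast
  let ?q = "map_poly (\<delta> ^^ n) p"
  have q: "pover S ?q" using Suc by blast
  have "(dd ^^ Suc n) (poly p u) = dd (poly ?q u)" using Suc by simp
  also have "\<dots> = poly (map_poly \<delta> ?q) u" using dd_poly[OF q] Suc.prems by (simp add: E_def)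
  also have "map_poly \<delta> ?q = map_poly (\<delta> ^^ Suc n) p" using map_poly_map_poly[of \<delta> "\<delta> ^^ n" p] d0 z by simp
  moreover have "pover S (map_poly \<delta> ?q)" by (rule pover_map[OF sub q]) (auto simp: dS_in d0)
  ultimately show ?case using map_poly_map_poly[of \<delta> "\<delta> ^^ n" p] d0 z by (simp add: o_def)
qed

lemma lnd_c0:
  assumes "c = 0" "\<And>x. x \<in> S \<Longrightarrow> \<exists>n. (\<delta> ^^ n) x = 0" "z \<in> SU"
  shows "\<exists>n. (dd ^^ n) z = 0"
proof -
  obtain p where p: "pover S p" "z = poly p u" using assms(3) by (rule SU_E)
  have "\<forall>i. \<exists>n. (\<delta> ^^ n) (coeff p i) = 0" using assms(2) p(1) unfolding pover_def by blast
  then obtain nn where nn: "\<And>i. (\<delta> ^^ nn i) (coeff p i) = 0" by metis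
  define N where "N = Max (nn ` {..degree p})"
  have "map_poly (\<delta> ^^ N) p = 0"
  proof (rule poly_eqI)
    fix i
    have z: "(\<delta> ^^ N) 0 = 0" using funpow_zero_fix d0 by blast
    show "coeff (map_poly (\<delta> ^^ N) p) i = coeff 0 i"
    proof (cases "i \<le> degree p")
      case True
      then have "nn i \<le> N" unfolding N_def by (intro Max_ge) auto
      then show ?thesis using z funpow_zero_ge[OF d0 nn] by (simp add: coeff_map_poly)
    next
      case False
      then show ?thesis using z by (simp add: coeff_map_poly coeff_eq_0)
    qed
  qed
  then show ?thesis using iter_c0[OF assms(1) p(1), of N] p(2) by auto
qed

lemma iter_zero:
  assumes "\<And>x. x \<in> S \<Longrightarrow> \<delta> x = 0" "c = 1" "pover S p"
  shows "(dd ^^ n) (poly p u) = poly ((pderiv ^^ n) p) u \<and> pover S ((pderiv ^^ n) p)"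
proof (induction n)
  case 0 then show ?case using assms by simp
next
  case (Suc n)
  let ?q = "(pderiv ^^ n) p"
  have q: "pover S ?q" using Suc by blast
  have m0: "map_poly \<delta> ?q = 0" by (rule poly_eqI) (use q assms(1) in \<open>simp add: coeff_map_poly d0 pover_def\<close>)
  have "(dd ^^ Suc n) (poly p u) = dd (poly ?q u)" using Suc by simp
  also have "\<dots> = poly (pderiv ?q) u" using dd_poly[OF q] assms(2) m0 by (simp add: E_def)
  finally show ?case using pover_pderiv[OF sub q] by simp
qed

lemma lnd_zero:
  assumes "\<And>x. x \<in> S \<Longrightarrow> \<delta> x = 0" "c = 1" "z \<in> SU"
  shows "\<exists>n. (dd ^^ n) z = 0"
proof -
  obtain p where p: "pover S p" "z = poly p u" using assms(3) by (rule SU_E)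
  have "(dd ^^ Suc (degree p)) (poly p u) = poly ((pderiv ^^ Suc (degree p)) p) u"
    using iter_zero[OF assms(1,2) p(1), of "Suc (degree p)"] by blast
  also have "(pderiv ^^ Suc (degree p)) p = 0" by (rule pderiv_nilp) simp
  finally show ?thesis using p(2) by (intro exI[of _ "Suc (degree p)"]) simp
qed

end

locale loc =
  fixes S :: "'a::field set" and \<delta> :: "'a \<Rightarrow> 'a" and s :: 'a
  assumes sub: "is_subring S" and dS: "der S \<delta>" and sS: "s \<in> S" and s0: "s \<noteq> 0" and ds: "\<delta> s = 0"
begin

definition L where "L = {y / s ^ M | y M. y \<in> S}"
definition rp where "rp z = (SOME yM. fst yM \<in> S \<and> z = fst yM / s ^ snd yM)"
definition dl where "dl z = \<delta> (fst (rp z)) / s ^ snd (rp z)"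

lemma dadd: "x \<in> S \<Longrightarrow> y \<in> S \<Longrightarrow> \<delta> (x + y) = \<delta> x + \<delta> y" using dS unfolding der_def by blast
lemma dmult: "x \<in> S \<Longrightarrow> y \<in> S \<Longrightarrow> \<delta> (x * y) = x * \<delta> y + y * \<delta> x" using dS unfolding der_def by blast
lemma dS_in: "x \<in> S \<Longrightarrow> \<delta> x \<in> S" using dS unfolding der_def by blast
lemma spow: "s ^ n \<in> S" using subring_pow[OF sub sS] .
lemma dspow: "\<delta> (s ^ n) = 0" using der_pow_zero[OF sub dS sS ds] .
lemma spow0: "s ^ n \<noteq> 0" using s0 by simp

lemma dl_eq: assumes "y \<in> S" shows "dl (y / s ^ M) = \<delta> y / s ^ M"
proof -
  define yM where "yM = rp (y / s ^ M)"
  have "fst yM \<in> S \<and> y / s ^ M = fst yM / s ^ snd yM"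
    unfolding yM_def rp_def by (rule someI[of _ "(y, M)"]) (use assms in auto)
  then obtain y' M' where yM: "yM = (y', M')" "y' \<in> S" "y / s ^ M = y' / s ^ M'" by (cases yM) auto
  have e: "y * s ^ M' = y' * s ^ M" using yM(3) spow0 by (simp add: divide_simps)
  have "\<delta> (y * s ^ M') = \<delta> (y' * s ^ M)" using e by simp
  then have "\<delta> y * s ^ M' = \<delta> y' * s ^ M" using dmult[OF assms spow] dmult[OF yM(2) spow] dspow by (simp add: mult.commute)
  then have "\<delta> y / s ^ M = \<delta> y' / s ^ M'" using spow0 by (simp add: divide_simps)
  then show ?thesis unfolding dl_def yM_def[symmetric] using yM(1) by simp
qed

lemma L_I: "y \<in> S \<Longrightarrow> y / s ^ M \<in> L" unfolding L_def by blast
lemma L_E: "z \<in> L \<Longrightarrow> (\<And>y M. y \<in> S \<Longrightarrow> z = y / s ^ M \<Longrightarrow> P) \<Longrightarrow> P" unfolding L_def by blast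

lemma add_frac: "y / s ^ M + y' / s ^ M' = (y * s ^ M' + y' * s ^ M) / s ^ (M + M')"
  using s0 by (simp add: divide_simps power_add algebra_simps)
lemma mult_frac: "(y / s ^ M) * (y' / s ^ M') = (y * y') / s ^ (M + M')"
  using s0 by (simp add: divide_simps power_add algebra_simps)

lemma S_L: "y \<in> S \<Longrightarrow> y \<in> L" using L_I[of y 0] by simp
lemma dl_S: "y \<in> S \<Longrightarrow> dl y = \<delta> y" using dl_eq[of y 0] by simp
lemma inv_L: "1 / s ^ M \<in> L" using L_I[OF subring_parts(2)[OF sub]] .
lemma dl_inv: "dl (1 / s ^ M) = 0" using dl_eq[OF subring_parts(2)[OF sub]] der_one[OF sub dS] by simp

lemma L_sub: "is_subring L"
  unfolding is_subring_def
proof (intro conjI ballI)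
  show "0 \<in> L" using S_L subring_parts(1)[OF sub] by blast
  show "1 \<in> L" using S_L subring_parts(2)[OF sub] by blast
  fix x y assume "x \<in> L" "y \<in> L"
  then obtain a M b M' where ab: "a \<in> S" "b \<in> S" "x = a / s ^ M" "y = b / s ^ M'" by (metis L_E)
  show "x + y \<in> L" unfolding ab add_frac
    by (intro L_I subring_parts(3)[OF sub] subring_parts(4)[OF sub] ab spow)
  show "x * y \<in> L" unfolding ab mult_frac
    by (intro L_I subring_parts(4)[OF sub] ab)
next
  fix x assume "x \<in> L"
  then obtain a M where "a \<in> S" "x = a / s ^ M" by (metis L_E)
  then show "- x \<in> L" using L_I[OF subring_parts(5)[OF sub]] by (metis minus_divide_left)
qed

lemma dl_der: "der L dl"
  unfolding der_def
proof (intro conjI ballI)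
  fix x assume "x \<in> L"
  then obtain a M where "a \<in> S" "x = a / s ^ M" by (metis L_E)
  then show "dl x \<in> L" using dl_eq L_I dS_in by simp
next
  fix x y assume "x \<in> L" "y \<in> L"
  then obtain a M b M' where ab: "a \<in> S" "b \<in> S" "x = a / s ^ M" "y = b / s ^ M'" by (metis L_E)
  have in1: "a * s ^ M' \<in> S" "b * s ^ M \<in> S" using ab spow subring_parts(4)[OF sub] by auto
  have "dl (x + y) = \<delta> (a * s ^ M' + b * s ^ M) / s ^ (M + M')"
    unfolding ab add_frac by (intro dl_eq subring_parts(3)[OF sub] in1)
  also have "\<dots> = (\<delta> a * s ^ M' + \<delta> b * s ^ M) / s ^ (M + M')"
    using dadd[OF in1] dmult[OF ab(1) spow] dmult[OF ab(2) spow] dspow by simp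
  also have "\<dots> = dl x + dl y" unfolding ab dl_eq[OF ab(1)] dl_eq[OF ab(2)] add_frac ..
  finally show "dl (x + y) = dl x + dl y" .
  have "dl (x * y) = \<delta> (a * b) / s ^ (M + M')"
    unfolding ab mult_frac by (intro dl_eq subring_parts(4)[OF sub] ab)
  also have "\<dots> = (a * \<delta> b + b * \<delta> a) / s ^ (M + M')" using dmult[OF ab(1,2)] by simp
  also have "\<dots> = x * dl y + y * dl x" unfolding ab dl_eq[OF ab(1)] dl_eq[OF ab(2)]
    using s0 by (simp add: divide_simps power_add algebra_simps)
  finally show "dl (x * y) = x * dl y + y * dl x" .
qed

lemma dl_iter: "y \<in> S \<Longrightarrow> (dl ^^ n) (y / s ^ M) = (\<delta> ^^ n) y / s ^ M \<and> (\<delta> ^^ n) y \<in> S"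
  by (induction n) (auto simp: dl_eq dS_in)

lemma dl_lnd: "(\<And>x. x \<in> S \<Longrightarrow> \<exists>n. (\<delta> ^^ n) x = 0) \<Longrightarrow> z \<in> L \<Longrightarrow> \<exists>n. (dl ^^ n) z = 0"
proof -
  assume a: "\<And>x. x \<in> S \<Longrightarrow> \<exists>n. (\<delta> ^^ n) x = 0" "z \<in> L"
  then obtain y M where "y \<in> S" "z = y / s ^ M" by (metis L_E)
  then show ?thesis using a(1) dl_iter by fastforce
qed

end


lemma no_descending:
  fixes Y :: "nat set" and g :: "nat \<Rightarrow> nat"
  assumes "infinite Y" "\<And>i j. i \<in> Y \<Longrightarrow> j \<in> Y \<Longrightarrow> i < j \<Longrightarrow> g j < g i"
  shows False
proof -
  let ?e = "enumerate Y"
  have "g (?e n) + n \<le> g (?e 0)" for n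
  proof (induction n)
    case (Suc n)
    have "g (?e (Suc n)) < g (?e n)"
      using assms enumerate_in_set[OF assms(1)] enumerate_step[OF assms(1)] by blast
    then show ?case using Suc by simp
  qed simp
  from this[of "Suc (g (?e 0))"] show False by simp
qed

lemma dickson_seq:
  fixes s :: "nat \<Rightarrow> 'x \<Rightarrow> nat"
  assumes "finite H"
  shows "\<exists>Y. infinite Y \<and> (\<forall>i\<in>Y. \<forall>j\<in>Y. i < j \<longrightarrow> (\<forall>h\<in>H. s i h \<le> s j h))"
  using assms
proof (induction H rule: finite_induct)
  case empty
  then show ?case by (intro exI[of _ UNIV]) auto
next
  case (insert h H)
  then obtain Y0 where Y0: "infinite Y0" "\<forall>i\<in>Y0. \<forall>j\<in>Y0. i < j \<longrightarrow> (\<forall>h\<in>H. s i h \<le> s j h)" by blast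
  define col where "col X = (if s (Min X) h \<le> s (Max X) h then 0 else (1::nat))" for X :: "nat set"
  have "\<forall>x\<in>Y0. \<forall>y\<in>Y0. x \<noteq> y \<longrightarrow> col {x, y} < 2" unfolding col_def by auto
  from Ramsey2[OF Y0(1) this] obtain Y t where Y: "Y \<subseteq> Y0" "infinite Y" "t < 2"
    "\<forall>x\<in>Y. \<forall>y\<in>Y. x \<noteq> y \<longrightarrow> col {x, y} = t" by blast
  have mm: "i < j \<Longrightarrow> Min {i, j} = i \<and> Max {i, j} = j" for i j :: nat by auto
  show ?case
  proof (cases "t = 0")
    case True
    have "\<forall>i\<in>Y. \<forall>j\<in>Y. i < j \<longrightarrow> (\<forall>h'\<in>insert h H. s i h' \<le> s j h')"
    proof (intro ballI impI)
      fix i j h' assume ij: "i \<in> Y" "j \<in> Y" "i < j" and h': "h' \<in> insert h H"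
      have "col {i, j} = 0" using Y(4) ij True by auto
      then have "s i h \<le> s j h" using mm[OF ij(3)] unfolding col_def by (auto split: if_splits)
      then show "s i h' \<le> s j h'" using h' Y0(2) Y(1) ij by auto
    qed
    then show ?thesis using Y(2) by blast
  next
    case False
    have "s j h < s i h" if ij: "i \<in> Y" "j \<in> Y" "i < j" for i j
    proof -
      have "col {i, j} = 1" using Y(3,4) ij False by auto
      then show ?thesis using mm[OF ij(3)] unfolding col_def by (auto split: if_splits)
    qed
    then have False using no_descending[OF Y(2), of "\<lambda>i. s i h"] by blast
    then show ?thesis ..
  qed
qed

lemma antichain_finite:
  fixes X :: "('x \<Rightarrow> nat) set"
  assumes "finite H" "\<And>\<alpha> x. \<alpha> \<in> X \<Longrightarrow> x \<notin> H \<Longrightarrow> \<alpha> x = 0"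
    "\<And>\<alpha> \<beta>. \<alpha> \<in> X \<Longrightarrow> \<beta> \<in> X \<Longrightarrow> (\<forall>x. \<alpha> x \<le> \<beta> x) \<Longrightarrow> \<alpha> = \<beta>"
  shows "finite X"
proof (rule ccontr)
  assume "infinite X"
  then obtain s :: "nat \<Rightarrow> ('x \<Rightarrow> nat)" where s: "inj s" "range s \<subseteq> X"
    using infinite_countable_subset by blast
  obtain Y where Y: "infinite Y" "\<forall>i\<in>Y. \<forall>j\<in>Y. i < j \<longrightarrow> (\<forall>h\<in>H. s i h \<le> s j h)"
    using dickson_seq[OF assms(1)] by blast
  obtain i where i: "i \<in> Y" using Y(1) by (metis finite.emptyI ex_in_conv)
  obtain j where j: "j \<in> Y" "i < j" using Y(1) by (metis infinite_nat_iff_unbounded)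
  have "\<forall>x. s i x \<le> s j x"
  proof
    fix x show "s i x \<le> s j x"
    proof (cases "x \<in> H")
      case True then show ?thesis using Y(2) i j by blast
    next
      case False
      have "s i \<in> X" using s(2) by auto
      then have "s i x = 0" using assms(2) False by blast
      then show ?thesis by simp
    qed
  qed
  then have "s i = s j" using assms(3) s(2) by blast
  then show False using s(1) j(2) by (metis inj_eq less_irrefl)
qed


lemma nsm_add: "nsm (m + n) g = nsm m g + nsm n g"
  by (induction m) (auto simp: algebra_simps)

lemma nsm_diff: "n \<le> m \<Longrightarrow> nsm m g - nsm n g = nsm (m - n) g"
  using nsm_add[of "m - n" n g] by simp

lemma nsm_one: "nsm 1 g = g" by simp

lemma nsm_inj: "infinite_order d \<Longrightarrow> nsm m d = nsm n d \<Longrightarrow> m = n"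
proof (rule ccontr)
  assume a: "infinite_order d" "nsm m d = nsm n d" "m \<noteq> n"
  show False
  proof (cases "m < n")
    case True
    then have "nsm (n - m) d = 0" using nsm_diff[of m n d] a(2) by simp
    then show False using a(1) True unfolding infinite_order_def by simp
  next
    case False
    then have "nsm (m - n) d = 0" using nsm_diff[of n m d] a(2,3) by simp
    then show False using a(1,3) False unfolding infinite_order_def by simp
  qed
qed

lemma cyc_nsm: "nsm n d \<in> cyc d" unfolding cyc_def by blast
lemma cyc_neg_nsm: "- nsm n d \<in> cyc d" unfolding cyc_def by blast
lemma cyc_0: "0 \<in> cyc d" using cyc_nsm[of 0 d] by simp
lemma cyc_cases: "g \<in> cyc d \<Longrightarrow> (\<And>n. g = nsm n d \<Longrightarrow> P) \<Longrightarrow> (\<And>n. g = - nsm n d \<Longrightarrow> P) \<Longrightarrow> P"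
  unfolding cyc_def by blast
lemma cyc_neg: "g \<in> cyc d \<Longrightarrow> - g \<in> cyc d"
  by (erule cyc_cases) (auto simp: cyc_nsm cyc_neg_nsm)
lemma nsm_sub_cyc: "nsm m d - nsm n d \<in> cyc d"
proof (cases "n \<le> m")
  case True then show ?thesis using nsm_diff[OF True, of d] cyc_nsm by metis
next
  case False
  then have "nsm m d - nsm n d = - nsm (n - m) d" using nsm_diff[of m n d] by (simp add: algebra_simps)
  then show ?thesis using cyc_neg_nsm by metis
qed
lemma cyc_add: "g \<in> cyc d \<Longrightarrow> h \<in> cyc d \<Longrightarrow> g + h \<in> cyc d"
proof (erule cyc_cases; erule cyc_cases)
  fix m n
  show "g = nsm m d \<Longrightarrow> h = nsm n d \<Longrightarrow> g + h \<in> cyc d" using nsm_add[of m n d] cyc_nsm by metis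
  show "g = nsm m d \<Longrightarrow> h = - nsm n d \<Longrightarrow> g + h \<in> cyc d" using nsm_sub_cyc[of m d n] by simp
  show "g = - nsm m d \<Longrightarrow> h = nsm n d \<Longrightarrow> g + h \<in> cyc d" using nsm_sub_cyc[of n d m] by (simp add: algebra_simps)
  show "g = - nsm m d \<Longrightarrow> h = - nsm n d \<Longrightarrow> g + h \<in> cyc d" using nsm_add[of m n d] cyc_neg_nsm[of "m + n" d] by (simp add: algebra_simps)
qed
lemma cyc_diff: "g \<in> cyc d \<Longrightarrow> h \<in> cyc d \<Longrightarrow> g - h \<in> cyc d"
  using cyc_add[of g d "- h"] cyc_neg[of h d] by simp

definition iota :: "'b::idom \<Rightarrow> 'b fract" where "iota x = Fract x 1"

lemma iota_0[simp]: "iota 0 = 0" by (simp add: iota_def fract_collapse)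
lemma iota_1[simp]: "iota 1 = 1" by (simp add: iota_def fract_collapse)
lemma iota_add[simp]: "iota (x + y) = iota x + iota y" by (simp add: iota_def)
lemma iota_mult[simp]: "iota (x * y) = iota x * iota y" by (simp add: iota_def)
lemma iota_neg[simp]: "iota (- x) = - iota x" by (simp add: iota_def)
lemma iota_diff[simp]: "iota (x - y) = iota x - iota y" by (simp add: iota_def)
lemma iota_pow[simp]: "iota (x ^ n) = iota x ^ n" by (induction n) auto
lemma iota_sum[simp]: "iota (sum g A) = (\<Sum>a\<in>A. iota (g a))"
  by (induction A rule: infinite_finite_induct) auto
lemma iota_inj[simp]: "iota x = iota y \<longleftrightarrow> x = y" by (simp add: iota_def eq_fract)
lemma iota_eq0[simp]: "iota x = 0 \<longleftrightarrow> x = 0" using iota_inj[of x 0] by simp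
lemma Fract_iota: "b \<noteq> 0 \<Longrightarrow> Fract a b = iota a / iota b" by (simp add: iota_def)

locale cyl = gr Bg for Bg :: "'g::ab_group_add \<Rightarrow> 'b::idom set" +
  fixes d :: 'g and f :: 'b
  assumes one0: "1 \<in> Bg 0" and fd: "f \<in> Bg d" and f0: "f \<noteq> 0" and inf: "infinite_order d"
begin

lemma d_ne0: "d \<noteq> 0" using inf unfolding infinite_order_def by (metis nsm_one zero_less_one)

lemma pow_in: "f ^ n \<in> Bg (nsm n d)"
proof (induction n)
  case 0 then show ?case using one0 by simp
next
  case (Suc n) then show ?case using mult_in[OF fd Suc] by simp
qed

lemma DEG: assumes "b * f ^ m \<in> Bg e" shows "b \<in> Bg (e - nsm m d)"
proof (rule only_comp_in)
  fix h assume h: "h \<noteq> e - nsm m d"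
  have "comp (f ^ m * b) (h + nsm m d) = f ^ m * comp b (h + nsm m d - nsm m d)"
    by (rule comp_mult_homog[OF pow_in])
  moreover have "comp (f ^ m * b) (h + nsm m d) = 0"
    using comp_homog[OF assms] h by (simp add: mult.commute algebra_simps)
  ultimately show "comp b h = 0" using f0 by simp
qed

lemma ver_iff: "x \<in> veronese Bg d \<longleftrightarrow> (\<forall>i. comp x i \<noteq> 0 \<longrightarrow> i \<in> cyc d)"
proof
  assume "x \<in> veronese Bg d"
  then obtain c where c: "finite {i. c i \<noteq> 0}" "\<forall>i. c i \<in> Bg i" "{i. c i \<noteq> 0} \<subseteq> cyc d" "x = (\<Sum>i\<in>{i. c i \<noteq> 0}. c i)"
    unfolding veronese_def by blast
  have "comp x = c" using comp_unique c by blast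
  then show "\<forall>i. comp x i \<noteq> 0 \<longrightarrow> i \<in> cyc d" using c(3) by auto
next
  assume "\<forall>i. comp x i \<noteq> 0 \<longrightarrow> i \<in> cyc d"
  then show "x \<in> veronese Bg d" unfolding veronese_def using comp_props[of x] by blast
qed

lemma ver_add: "x \<in> veronese Bg d \<Longrightarrow> y \<in> veronese Bg d \<Longrightarrow> x + y \<in> veronese Bg d"
  unfolding ver_iff comp_add by (metis add.left_neutral add.right_neutral)
lemma ver_neg: "x \<in> veronese Bg d \<Longrightarrow> - x \<in> veronese Bg d"
  unfolding ver_iff comp_neg by auto
lemma ver_diff: "x \<in> veronese Bg d \<Longrightarrow> y \<in> veronese Bg d \<Longrightarrow> x - y \<in> veronese Bg d"
  unfolding ver_iff comp_diff by (metis diff_zero diff_self)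
lemma ver_homog: "x \<in> Bg g \<Longrightarrow> g \<in> cyc d \<Longrightarrow> x \<in> veronese Bg d"
  unfolding ver_iff using comp_homog by auto
lemma ver_0: "0 \<in> veronese Bg d" using ver_homog[OF zero_in cyc_0] .
lemma ver_sum: "(\<And>a. a \<in> A \<Longrightarrow> x a \<in> veronese Bg d) \<Longrightarrow> sum x A \<in> veronese Bg d"
  by (induction A rule: infinite_finite_induct) (auto intro: ver_add ver_0)
lemma ver_deg: "x \<in> Bg i \<Longrightarrow> x \<noteq> 0 \<Longrightarrow> x \<in> veronese Bg d \<Longrightarrow> i \<in> cyc d"
  unfolding ver_iff using comp_homog by (metis)
lemma ver_comp: "x \<in> veronese Bg d \<Longrightarrow> comp x i \<noteq> 0 \<Longrightarrow> i \<in> cyc d"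
  unfolding ver_iff by blast
lemma ver_decomp: "x = (\<Sum>i\<in>{i. comp x i \<noteq> 0}. comp x i)" by (rule comp_props)

abbreviation "R0 \<equiv> deg0_loc Bg d f"
abbreviation "phi \<equiv> iota f"

lemma phi0: "phi \<noteq> 0" using f0 by simp

lemma R0_iota: "z \<in> R0 \<longleftrightarrow> (\<exists>a n. a \<in> Bg (nsm n d) \<and> z = iota a / phi ^ n)"
  unfolding deg0_loc_def using Fract_iota[of "f ^ _"] f0 by auto

lemma R0_I: "a \<in> Bg (nsm n d) \<Longrightarrow> iota a / phi ^ n \<in> R0" using R0_iota by blast

lemma phi_transc:
  assumes q: "pover R0 q" and z: "poly q phi = 0"
  shows "q = 0"
proof -
  have "\<forall>k. \<exists>a n. a \<in> Bg (nsm n d) \<and> coeff q k = iota a / phi ^ n"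
    using q R0_iota unfolding pover_def by blast
  then obtain a n where an: "\<And>k. a k \<in> Bg (nsm (n k) d)" "\<And>k. coeff q k = iota (a k) / phi ^ (n k)"
    by metis
  define N where "N = Max (n ` {..degree q})"
  define a' where "a' k = a k * f ^ (N - n k)" for k
  have nN: "k \<le> degree q \<Longrightarrow> n k \<le> N" for k unfolding N_def by (intro Max_ge) auto
  have a'in: "k \<le> degree q \<Longrightarrow> a' k \<in> Bg (nsm N d)" for k
    using mult_in[OF an(1) pow_in, of k "N - n k"] nsm_add[of "n k" "N - n k" d] nN[of k] unfolding a'_def by simp
  have cq: "k \<le> degree q \<Longrightarrow> coeff q k = iota (a' k) / phi ^ N" for k
  proof -
    assume k: "k \<le> degree q"
    have "phi ^ N = phi ^ (n k) * phi ^ (N - n k)" using nN[OF k] by (simp flip: power_add)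
    then show ?thesis unfolding an(2) a'_def using phi0 by (simp add: divide_simps)
  qed
  have "0 = poly q phi" using z by simp
  also have "\<dots> = (\<Sum>k\<le>degree q. coeff q k * phi ^ k)" by (rule poly_altdef)
  also have "\<dots> = (\<Sum>k\<le>degree q. iota (a' k * f ^ k) / phi ^ N)"
    by (rule sum.cong) (auto simp: cq)
  also have "\<dots> = iota (\<Sum>k\<le>degree q. a' k * f ^ k) / phi ^ N"
    by (simp add: sum_divide_distrib)
  finally have "iota (\<Sum>k\<le>degree q. a' k * f ^ k) = 0" using phi0 by (simp del: iota_sum)
  then have s0: "(\<Sum>k\<le>degree q. a' k * f ^ k) = 0" by (simp only: iota_eq0)
  have "a' k * f ^ k = 0" if k: "k \<le> degree q" for k
  proof (rule dist_sum_zero[OF _ _ _ s0])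
    show "finite {..degree q}" by simp
    show "inj_on (\<lambda>k. nsm (N + k) d) {..degree q}" using nsm_inj[OF inf] unfolding inj_on_def by (metis add_left_cancel)
    show "\<And>i. i \<in> {..degree q} \<Longrightarrow> a' i * f ^ i \<in> Bg (nsm (N + i) d)"
      using mult_in[OF a'in pow_in] by (simp add: nsm_add)
    show "k \<in> {..degree q}" using k by simp
  qed
  then have "k \<le> degree q \<Longrightarrow> coeff q k = 0" for k using cq f0 by simp
  then show "q = 0" by (metis coeff_eq_0 leading_coeff_0_iff not_le)
qed

end


lemma sum_list_map_zero: "(\<forall>x\<in>set l. g x = 0) \<Longrightarrow> sum_list (map g l) = 0"
  by (induction l) auto

lemma alg_gen_sum: "0 \<in> K \<Longrightarrow> (\<And>a. a \<in> A \<Longrightarrow> g a \<in> alg_gen K T) \<Longrightarrow> sum g A \<in> alg_gen K T"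
  by (induction A rule: infinite_finite_induct) (auto intro: alg_gen.intros)

lemma alg_gen_sum_list: "0 \<in> K \<Longrightarrow> (\<And>a. a \<in> set xs \<Longrightarrow> a \<in> alg_gen K T) \<Longrightarrow> sum_list xs \<in> alg_gen K T"
  by (induction xs) (auto intro: alg_gen.intros)

lemma alg_gen_mono: "x \<in> alg_gen K S \<Longrightarrow> S \<subseteq> alg_gen K T \<Longrightarrow> x \<in> alg_gen K T"
  by (induction rule: alg_gen.induct) (auto intro: alg_gen.intros)

lemma alg_gen_pow: "1 \<in> K \<Longrightarrow> x \<in> alg_gen K T \<Longrightarrow> x ^ n \<in> alg_gen K T"
  by (induction n) (auto intro: alg_gen.intros)

lemma alg_gen_prod: "1 \<in> K \<Longrightarrow> (\<And>a. a \<in> A \<Longrightarrow> g a \<in> alg_gen K T) \<Longrightarrow> prod g A \<in> alg_gen K T"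
  by (induction A rule: infinite_finite_induct) (auto intro: alg_gen.intros)

context cyl begin

lemma pow_in_gen: "h \<in> Bg g \<Longrightarrow> h ^ n \<in> Bg (nsm n g)"
proof (induction n)
  case 0 then show ?case using one0 by simp
next
  case (Suc n) then show ?case using mult_in[OF Suc.prems Suc.IH] by simp
qed

lemma prod_in: "(\<And>a. a \<in> A \<Longrightarrow> x a \<in> Bg (g a)) \<Longrightarrow> prod x A \<in> Bg (sum g A)"
proof (induction A rule: infinite_finite_induct)
  case (infinite A) then show ?case using one0 by simp
next
  case empty then show ?case using one0 by simp
next
  case (insert a F) then show ?case using mult_in[of "x a" "g a" "prod x F" "sum g F"] by simp
qed

end

locale cylK = cyl Bg d f for Bg :: "'g::ab_group_add \<Rightarrow> 'b::idom set" and d f +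
  fixes K :: "'b set" and S :: "'b set"
  assumes Ksub: "is_subring K" and K0: "K \<subseteq> Bg 0" and Sfin: "finite S" and Sgen: "alg_gen K S = UNIV"
begin

definition H where "H = (\<Union>s\<in>S. comp s ` {i. comp s i \<noteq> 0})"

lemma H_fin: "finite H" unfolding H_def using Sfin comp_props(1) by auto

definition dg where "dg h = (SOME g. h \<in> Bg g)"

lemma H_homog: "h \<in> H \<Longrightarrow> h \<in> Bg (dg h)"
  unfolding H_def dg_def by (auto intro: someI comp_props(2))

lemma K0': "0 \<in> K" "1 \<in> K" using Ksub by (auto simp: subring_parts)

lemma H_gen: "alg_gen K H = UNIV"
proof -
  have "S \<subseteq> alg_gen K H"
  proof
    fix s assume s: "s \<in> S"
    have "s = (\<Sum>i\<in>{i. comp s i \<noteq> 0}. comp s i)" by (rule comp_props)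
    also have "\<dots> \<in> alg_gen K H"
      by (rule alg_gen_sum[OF K0'(1)]) (use s in \<open>auto simp: H_def intro: alg_gen.base_S\<close>)
    finally show "s \<in> alg_gen K H" .
  qed
  then show ?thesis using alg_gen_mono Sgen by blast
qed

definition mono :: "('b \<Rightarrow> nat) \<Rightarrow> 'b" where "mono \<alpha> = (\<Prod>h\<in>H. h ^ \<alpha> h)"
definition mdeg :: "('b \<Rightarrow> nat) \<Rightarrow> 'g" where "mdeg \<alpha> = (\<Sum>h\<in>H. nsm (\<alpha> h) (dg h))"

lemma mono_in: "mono \<alpha> \<in> Bg (mdeg \<alpha>)"
  unfolding mono_def mdeg_def by (rule prod_in, rule pow_in_gen, rule H_homog)

lemma mono_add: "mono (\<lambda>x. \<alpha> x + \<beta> x) = mono \<alpha> * mono \<beta>"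
  unfolding mono_def by (simp add: power_add prod.distrib)

lemma mdeg_add: "mdeg (\<lambda>x. \<alpha> x + \<beta> x) = mdeg \<alpha> + mdeg \<beta>"
  unfolding mdeg_def by (simp add: nsm_add sum.distrib)

lemma mono_zero: "mono (\<lambda>_. 0) = 1" unfolding mono_def by simp

definition restr where "restr \<alpha> = (\<lambda>x. if x \<in> H then \<alpha> x else 0)"
lemma mono_restr: "mono (restr \<alpha>) = mono \<alpha>" unfolding mono_def restr_def by (rule prod.cong) auto
lemma mdeg_restr: "mdeg (restr \<alpha>) = mdeg \<alpha>" unfolding mdeg_def restr_def by (rule sum.cong) auto

definition ev :: "('b \<times> ('b \<Rightarrow> nat)) list \<Rightarrow> 'b" where
  "ev xs = sum_list (map (\<lambda>p. fst p * mono (snd p)) xs)"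

definition prodl where
  "prodl xs ys = concat (map (\<lambda>p. map (\<lambda>q. (fst p * fst q, \<lambda>x. snd p x + snd q x)) ys) xs)"

lemma ev_append: "ev (xs @ ys) = ev xs + ev ys" unfolding ev_def by simp

lemma ev_map: "ev (map (\<lambda>q. (k * fst q, \<lambda>x. \<alpha> x + snd q x)) ys) = k * mono \<alpha> * ev ys"
  unfolding ev_def by (induction ys) (auto simp: mono_add algebra_simps)

lemma ev_prodl: "ev (prodl xs ys) = ev xs * ev ys"
proof (induction xs)
  case Nil then show ?case by (simp add: prodl_def ev_def)
next
  case (Cons p xs)
  have "ev (prodl (p # xs) ys) = ev (map (\<lambda>q. (fst p * fst q, \<lambda>x. snd p x + snd q x)) ys) + ev (prodl xs ys)"
    by (simp add: prodl_def ev_append)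
  also have "\<dots> = fst p * mono (snd p) * ev ys + ev xs * ev ys" using Cons ev_map by simp
  finally show ?case by (simp add: ev_def algebra_simps)
qed

lemma all_rep: "\<exists>xs. (\<forall>p\<in>set xs. fst p \<in> K) \<and> b = ev xs"
proof -
  have "b \<in> alg_gen K H" using H_gen by simp
  then show ?thesis
  proof (induction rule: alg_gen.induct)
    case (base_K c)
    then show ?case by (intro exI[of _ "[(c, \<lambda>_. 0)]"]) (simp add: ev_def mono_zero)
  next
    case (base_S s)
    let ?a = "\<lambda>x. if x = s then 1 else (0::nat)"
    have "mono ?a = (\<Prod>h\<in>H. if h = s then h else 1)" unfolding mono_def by (rule prod.cong) auto
    also have "\<dots> = s" using base_S H_fin by (simp add: prod.delta)
    finally show ?case using K0' by (intro exI[of _ "[(1, ?a)]"]) (simp add: ev_def)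
  next
    case (add x y)
    then obtain xs ys where "\<forall>p\<in>set xs. fst p \<in> K" "x = ev xs" "\<forall>p\<in>set ys. fst p \<in> K" "y = ev ys" by blast
    then show ?case by (intro exI[of _ "xs @ ys"]) (auto simp: ev_append)
  next
    case (mult x y)
    then obtain xs ys where a: "\<forall>p\<in>set xs. fst p \<in> K" "x = ev xs" "\<forall>p\<in>set ys. fst p \<in> K" "y = ev ys" by blast
    have "\<forall>p\<in>set (prodl xs ys). fst p \<in> K" using a(1,3) subring_parts(4)[OF Ksub] by (auto simp: prodl_def)
    then show ?case using a by (intro exI[of _ "prodl xs ys"]) (auto simp: ev_prodl)
  qed
qed

lemma term_in: "k \<in> K \<Longrightarrow> k * mono \<alpha> \<in> Bg (mdeg \<alpha>)"
  using mult_in[of k 0 "mono \<alpha>" "mdeg \<alpha>"] K0 mono_in by auto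

lemma ver_rep:
  assumes x: "x \<in> veronese Bg d"
  shows "\<exists>xs. (\<forall>p\<in>set xs. fst p \<in> K \<and> mdeg (snd p) \<in> cyc d) \<and> x = ev xs"
proof -
  obtain xs where xs: "\<forall>p\<in>set xs. fst p \<in> K" "x = ev xs" using all_rep by blast
  let ?P = "\<lambda>p. mdeg (snd p) \<in> cyc d"
  let ?ys = "filter ?P xs" and ?zs = "filter (\<lambda>p. \<not> ?P p) xs"
  have split: "ev xs = ev ?ys + ev ?zs" unfolding ev_def by (induction xs) auto
  have gen: "\<forall>p\<in>set l. fst p \<in> K \<and> mdeg (snd p) \<in> cyc d \<Longrightarrow> ev l \<in> veronese Bg d" for l
    unfolding ev_def by (induction l) (auto intro!: ver_add ver_homog[OF term_in] simp: ver_0)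
  have ysv: "ev ?ys \<in> veronese Bg d" by (rule gen) (use xs(1) in auto)
  have zsv: "ev ?zs \<in> veronese Bg d" using ver_diff[OF x ysv] xs(2) split by (simp add: algebra_simps)
  have "ev ?zs = 0"
  proof (rule all_comp_zero)
    fix i show "comp (ev ?zs) i = 0"
    proof (cases "i \<in> cyc d")
      case False then show ?thesis using ver_comp[OF zsv] by blast
    next
      case True
      have "comp (ev ?zs) i = sum_list (map (\<lambda>y. comp y i) (map (\<lambda>p. fst p * mono (snd p)) ?zs))"
        unfolding ev_def by (rule comp_sum_list)
      also have "\<dots> = 0"
      proof -
        have "\<forall>p\<in>set ?zs. comp (fst p * mono (snd p)) i = 0"
        proof
          fix p assume p: "p \<in> set ?zs"
          then have "fst p \<in> K" "mdeg (snd p) \<notin> cyc d" using xs(1) by auto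
          then show "comp (fst p * mono (snd p)) i = 0"
            using comp_homog[OF term_in] True by auto
        qed
        then show ?thesis unfolding map_map o_def by (rule sum_list_map_zero)
      qed
      finally show ?thesis .
    qed
  qed
  then show ?thesis using xs split by (intro exI[of _ ?ys]) auto
qed

definition sz :: "('b \<Rightarrow> nat) \<Rightarrow> nat" where "sz \<alpha> = (\<Sum>h\<in>H. \<alpha> h)"
definition M where "M = {\<alpha>. (\<forall>x. x \<notin> H \<longrightarrow> \<alpha> x = 0) \<and> mdeg \<alpha> \<in> cyc d}"
definition Mn where "Mn = {\<alpha>\<in>M. \<alpha> \<noteq> (\<lambda>_. 0) \<and> (\<forall>\<beta>\<in>M. \<beta> \<noteq> (\<lambda>_. 0) \<longrightarrow> (\<forall>x. \<beta> x \<le> \<alpha> x) \<longrightarrow> \<beta> = \<alpha>)}"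
definition E where "E = mono ` Mn"

lemma Mn_fin: "finite Mn"
proof (rule antichain_finite[OF H_fin])
  show "\<And>\<alpha> x. \<alpha> \<in> Mn \<Longrightarrow> x \<notin> H \<Longrightarrow> \<alpha> x = 0" unfolding Mn_def M_def by blast
  show "\<And>\<alpha> \<beta>. \<alpha> \<in> Mn \<Longrightarrow> \<beta> \<in> Mn \<Longrightarrow> \<forall>x. \<alpha> x \<le> \<beta> x \<Longrightarrow> \<alpha> = \<beta>" unfolding Mn_def by blast
qed

lemma E_fin: "finite E" unfolding E_def using Mn_fin by simp

lemma E_ver: "E \<subseteq> veronese Bg d"
  unfolding E_def Mn_def M_def using ver_homog[OF mono_in] by auto

lemma sz_le_eq:
  fixes \<gamma> \<beta> :: "'b \<Rightarrow> nat"
  assumes "\<forall>x. \<gamma> x \<le> \<beta> x" "\<forall>x. x \<notin> H \<longrightarrow> \<beta> x = 0" "sz \<beta> \<le> sz \<gamma>"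
  shows "\<gamma> = \<beta>"
proof (rule ccontr)
  assume "\<gamma> \<noteq> \<beta>"
  then obtain h where h: "\<gamma> h \<noteq> \<beta> h" by auto
  have hH: "h \<in> H"
  proof (rule ccontr)
    assume "h \<notin> H"
    then have "\<beta> h = 0" using assms(2) by blast
    moreover have "\<gamma> h \<le> \<beta> h" using assms(1) by blast
    ultimately show False using h by simp
  qed
  have "sz \<gamma> < sz \<beta>" unfolding sz_def
  proof (rule sum_strict_mono_ex1[OF H_fin])
    show "\<forall>x\<in>H. \<gamma> x \<le> \<beta> x" using assms(1) by blast
    have "\<gamma> h < \<beta> h" using assms(1) h le_neq_implies_less by blast
    then show "\<exists>a\<in>H. \<gamma> a < \<beta> a" using hH by blast
  qed
  then show False using assms(3) by simp
qed

lemma M_gen: "\<alpha> \<in> M \<Longrightarrow> mono \<alpha> \<in> alg_gen K E"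
proof (induction "sz \<alpha>" arbitrary: \<alpha> rule: less_induct)
  case less
  show ?case
  proof (cases "\<alpha> = (\<lambda>_. 0)")
    case True
    then show ?thesis using mono_zero K0' by (simp add: alg_gen.base_K)
  next
    case False
    let ?C = "{\<beta>\<in>M. \<beta> \<noteq> (\<lambda>_. 0) \<and> (\<forall>x. \<beta> x \<le> \<alpha> x)}"
    have "\<alpha> \<in> ?C" using less.prems False by auto
    then obtain \<beta> where b: "\<beta> \<in> ?C" "\<And>\<gamma>. \<gamma> \<in> ?C \<Longrightarrow> sz \<beta> \<le> sz \<gamma>"
      using ex_has_least_nat[of "\<lambda>\<beta>. \<beta> \<in> ?C" \<alpha> sz] by blast
    have bMn: "\<beta> \<in> Mn" unfolding Mn_def
    proof (intro CollectI conjI ballI impI)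
      show "\<beta> \<in> M" "\<beta> \<noteq> (\<lambda>_. 0)" using b(1) by auto
      fix \<gamma> assume g: "\<gamma> \<in> M" "\<gamma> \<noteq> (\<lambda>_. 0)" "\<forall>x. \<gamma> x \<le> \<beta> x"
      then have "\<gamma> \<in> ?C" using b(1) le_trans by blast
      then have "sz \<beta> \<le> sz \<gamma>" by (rule b(2))
      then show "\<gamma> = \<beta>" using sz_le_eq g(3) b(1) unfolding M_def by blast
    qed
    define \<alpha>' where "\<alpha>' = (\<lambda>x. \<alpha> x - \<beta> x)"
    have decomp: "\<alpha> = (\<lambda>x. \<alpha>' x + \<beta> x)" unfolding \<alpha>'_def using b(1) by auto
    have a'M: "\<alpha>' \<in> M"
    proof -
      have "mdeg \<alpha> = mdeg \<alpha>' + mdeg \<beta>" using mdeg_add decomp by metis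
      then have "mdeg \<alpha>' = mdeg \<alpha> - mdeg \<beta>" by (simp add: algebra_simps)
      then have "mdeg \<alpha>' \<in> cyc d" using less.prems b(1) cyc_diff unfolding M_def by auto
      then show ?thesis using less.prems unfolding M_def \<alpha>'_def by auto
    qed
    have "sz \<alpha>' < sz \<alpha>"
    proof -
      obtain h where h: "\<beta> h \<noteq> 0" using b(1) by auto
      then have hH: "h \<in> H" using b(1) unfolding M_def by auto
      have le: "\<beta> h \<le> \<alpha> h" using b(1) by auto
      show ?thesis unfolding sz_def \<alpha>'_def
        by (rule sum_strict_mono_ex1[OF H_fin]) (use h hH le in \<open>auto intro!: bexI[of _ h]\<close>)
    qed
    then have "mono \<alpha>' \<in> alg_gen K E" using less.hyps a'M by blast
    moreover have "mono \<beta> \<in> alg_gen K E" using bMn unfolding E_def by (auto intro: alg_gen.base_S)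
    ultimately show ?thesis using mono_add decomp by (metis alg_gen.mult)
  qed
qed

lemma ver_fg: "veronese Bg d \<subseteq> alg_gen K E"
proof
  fix x assume "x \<in> veronese Bg d"
  then obtain xs where xs: "\<forall>p\<in>set xs. fst p \<in> K \<and> mdeg (snd p) \<in> cyc d" "x = ev xs" using ver_rep by blast
  have "\<forall>p\<in>set xs. fst p * mono (snd p) \<in> alg_gen K E"
  proof
    fix p assume p: "p \<in> set xs"
    have "restr (snd p) \<in> M" using xs(1) p mdeg_restr unfolding M_def restr_def by auto
    then have "mono (snd p) \<in> alg_gen K E" using M_gen mono_restr by metis
    then show "fst p * mono (snd p) \<in> alg_gen K E" using xs(1) p by (auto intro: alg_gen.intros)
  qed
  then show "x \<in> alg_gen K E" unfolding xs(2) ev_def by (intro alg_gen_sum_list[OF K0'(1)]) auto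
qed

end


locale cylA = cylK Bg d f K S for Bg :: "'g::ab_group_add \<Rightarrow> 'b::idom set" and d f K S +
  fixes A :: "'b fract set" and t :: "'b fract"
  assumes Asub: "is_subring A" and AR0: "A \<subseteq> deg0_loc Bg d f" and tR0: "t \<in> deg0_loc Bg d f"
    and R0eq: "deg0_loc Bg d f = {poly p t | p. \<forall>i. coeff p i \<in> A}"
    and Atr: "\<And>p. (\<forall>i. coeff p i \<in> A) \<Longrightarrow> poly p t = 0 \<Longrightarrow> p = 0"
    and Kinv: "\<And>x. x \<in> K \<Longrightarrow> x \<noteq> 0 \<Longrightarrow> \<exists>y\<in>K. x * y = 1"

lemma der_zero_fun: "is_subring A \<Longrightarrow> der A (\<lambda>_. 0)"
  unfolding der_def by (simp add: subring_parts)

sublocale cylA \<subseteq> e0: ext A t "\<lambda>_. 0" 1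
  by unfold_locales (use Asub Atr der_zero_fun[OF Asub] in \<open>auto simp: pover_def\<close>)

context cylA begin

lemma R0_SU: "R0 = e0.SU" unfolding R0eq e0.SU_def pover_def ..

lemma R0_sub: "is_subring R0" using e0.SU_sub R0_SU by simp

lemma d0_der: "der R0 e0.dd"
  using e0.dd_der[OF subring_parts(2)[OF e0.SU_sub]] R0_SU by simp

end

sublocale cylA \<subseteq> e1: ext R0 phi e0.dd 0
  by unfold_locales (use R0_sub phi_transc d0_der in auto)

sublocale cylA \<subseteq> e2: loc e1.SU e1.dd phi
proof unfold_locales
  show "is_subring e1.SU" by (rule e1.SU_sub)
  show "der e1.SU e1.dd" by (rule e1.dd_der[OF subring_parts(1)[OF e1.SU_sub]])
  show "phi \<in> e1.SU" by (rule e1.u_SU)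
  show "phi \<noteq> 0" by (rule phi0)
  show "e1.dd phi = 0" by (rule e1.dd_u)
qed

context cylA begin

abbreviation "L \<equiv> e2.L"
abbreviation "dl \<equiv> e2.dl"

lemma L_sub: "is_subring L" by (rule e2.L_sub)
lemma dl_der: "der L dl" by (rule e2.dl_der)

lemma R0_L: "w \<in> R0 \<Longrightarrow> w \<in> L" using e2.S_L e1.S_SU by blast
lemma dl_R0: "w \<in> R0 \<Longrightarrow> dl w = e0.dd w" using e2.dl_S e1.S_SU e1.dd_S by simp
lemma phi_L: "phi \<in> L" using e2.S_L e1.u_SU by blast
lemma dl_phi: "dl phi = 0" using e2.dl_S e1.u_SU e1.dd_u by simp
lemma phipow_L: "phi ^ n \<in> L" using subring_pow[OF L_sub phi_L] .
lemma dl_phipow: "dl (phi ^ n) = 0" using der_pow_zero[OF L_sub dl_der phi_L dl_phi] .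
lemma dl_mult_phipow: "w \<in> L \<Longrightarrow> dl (phi ^ n * w) = phi ^ n * dl w"
  using der_mult_const[OF L_sub dl_der phipow_L dl_phipow] .
lemma dl_div_phipow: "w \<in> L \<Longrightarrow> dl (w / phi ^ n) = dl w / phi ^ n"
proof -
  assume w: "w \<in> L"
  have "dl ((1 / phi ^ n) * w) = (1 / phi ^ n) * dl w"
    by (rule der_mult_const[OF L_sub dl_der e2.inv_L e2.dl_inv w])
  then show ?thesis by simp
qed

lemma dl_add: "x \<in> L \<Longrightarrow> y \<in> L \<Longrightarrow> dl (x + y) = dl x + dl y" using dl_der unfolding der_def by blast
lemma dl_mult: "x \<in> L \<Longrightarrow> y \<in> L \<Longrightarrow> dl (x * y) = x * dl y + y * dl x" using dl_der unfolding der_def by blast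
lemma dl_in: "x \<in> L \<Longrightarrow> dl x \<in> L" using dl_der unfolding der_def by blast

definition Tset where "Tset = {iota b / phi ^ m | b m. True}"

lemma T_add: "x \<in> Tset \<Longrightarrow> y \<in> Tset \<Longrightarrow> x + y \<in> Tset"
proof -
  assume "x \<in> Tset" "y \<in> Tset"
  then obtain a m b n where ab: "x = iota a / phi ^ m" "y = iota b / phi ^ n" unfolding Tset_def by blast
  have "x + y = iota (a * f ^ n + b * f ^ m) / phi ^ (m + n)"
    unfolding ab using phi0 by (simp add: divide_simps power_add algebra_simps)
  then show ?thesis unfolding Tset_def by blast
qed

lemma T_mult: "x \<in> Tset \<Longrightarrow> y \<in> Tset \<Longrightarrow> x * y \<in> Tset"
proof -
  assume "x \<in> Tset" "y \<in> Tset"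
  then obtain a m b n where ab: "x = iota a / phi ^ m" "y = iota b / phi ^ n" unfolding Tset_def by blast
  have "x * y = iota (a * b) / phi ^ (m + n)"
    unfolding ab using phi0 by (simp add: divide_simps power_add algebra_simps)
  then show ?thesis unfolding Tset_def by blast
qed

lemma T_sub: "is_subring Tset"
  unfolding is_subring_def
proof (intro conjI ballI)
  show "0 \<in> Tset" unfolding Tset_def by (rule CollectI, rule exI[of _ 0], rule exI[of _ 0]) simp
  show "1 \<in> Tset" unfolding Tset_def by (rule CollectI, rule exI[of _ 1], rule exI[of _ 0]) simp
  fix x y assume "x \<in> Tset" "y \<in> Tset"
  then show "x + y \<in> Tset" "x * y \<in> Tset" using T_add T_mult by auto
next
  fix x assume "x \<in> Tset"
  then obtain a m where "x = iota a / phi ^ m" unfolding Tset_def by blast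
  then have "- x = iota (- a) / phi ^ m" by simp
  then show "- x \<in> Tset" unfolding Tset_def by blast
qed

lemma R0_T: "w \<in> R0 \<Longrightarrow> w \<in> Tset" unfolding Tset_def using R0_iota by blast
lemma phi_T: "phi \<in> Tset" unfolding Tset_def by (rule CollectI, rule exI[of _ f], rule exI[of _ 0]) simp

lemma S1_T: "y \<in> e1.SU \<Longrightarrow> y \<in> Tset"
proof -
  assume "y \<in> e1.SU"
  then obtain q where q: "pover R0 q" "y = poly q phi" by (rule e1.SU_E)
  have "poly q phi \<in> Tset" unfolding poly_altdef
    by (rule subring_sum[OF T_sub], rule subring_parts(4)[OF T_sub])
       (use q(1) R0_T subring_pow[OF T_sub phi_T] in \<open>auto simp: pover_def\<close>)
  then show ?thesis using q by simp
qed

lemma L_T: "z \<in> L \<Longrightarrow> \<exists>b m. z = iota b / phi ^ m"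
proof -
  assume "z \<in> L"
  then obtain y M where y: "y \<in> e1.SU" "z = y / phi ^ M" by (rule e2.L_E)
  obtain b m where "y = iota b / phi ^ m" using S1_T[OF y(1)] unfolding Tset_def by blast
  then have "z = iota b / phi ^ (m + M)" using y(2) phi0 by (simp add: power_add)
  then show ?thesis by blast
qed

lemma homog_L: assumes "x \<in> Bg g" "g \<in> cyc d" shows "iota x \<in> L"
  using assms(2)
proof (rule cyc_cases)
  fix n assume g: "g = nsm n d"
  have "iota x / phi ^ n \<in> R0" using R0_I assms(1) g by blast
  then have "iota x / phi ^ n * phi ^ n \<in> L" using subring_parts(4)[OF L_sub R0_L phipow_L] by blast
  then show ?thesis using phi0 by simp
next
  fix n assume g: "g = - nsm n d"
  have "x * f ^ n \<in> Bg (nsm 0 d)" using mult_in[OF assms(1) pow_in, of n] g by simp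
  then have "iota (x * f ^ n) / phi ^ 0 \<in> R0" using R0_I by blast
  then have "iota (x * f ^ n) / phi ^ 0 * (1 / phi ^ n) \<in> L"
    using subring_parts(4)[OF L_sub R0_L e2.inv_L] by blast
  moreover have "iota (x * f ^ n) / phi ^ 0 * (1 / phi ^ n) = iota x" using phi0 by simp
  ultimately show ?thesis by metis
qed

lemma ver_L: "x \<in> veronese Bg d \<Longrightarrow> iota x \<in> L"
proof -
  assume x: "x \<in> veronese Bg d"
  have "iota x = (\<Sum>i\<in>{i. comp x i \<noteq> 0}. iota (comp x i))"
    using ver_decomp[of x] by (metis iota_sum)
  also have "\<dots> \<in> L"
    by (rule subring_sum[OF L_sub], rule homog_L[OF comp_props(2)]) (use ver_comp[OF x] in auto)
  finally show ?thesis .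
qed

lemma K_ver: "k \<in> K \<Longrightarrow> k \<in> veronese Bg d" using K0 ver_homog cyc_0 by blast

lemma dl_K: assumes k: "k \<in> K" shows "dl (iota k) = 0"
proof (cases "k = 0")
  case True then show ?thesis using der_zero[OF L_sub dl_der] by simp
next
  case False
  obtain k' where k': "k' \<in> K" "k * k' = 1" using Kinv[OF k False] by blast
  have inR: "iota k \<in> R0" "iota k' \<in> R0" using R0_I[of k 0] R0_I[of k' 0] K0 k k' by auto
  obtain p where p: "pover A p" "iota k = poly p t" using inR(1) R0_SU by (metis e0.SU_E)
  obtain q where q: "pover A q" "iota k' = poly q t" using inR(2) R0_SU by (metis e0.SU_E)
  have "iota k * iota k' = 1" using k'(2) by (metis iota_1 iota_mult)
  then have "poly (p * q) t = poly 1 t" using p q by simp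
  then have pq: "p * q = 1" using e0.poly_inj pover_mult[OF Asub p(1) q(1)] pover_1[OF Asub] by blast
  then have "p \<noteq> 0" "q \<noteq> 0" by auto
  then have "degree p = 0" using degree_mult_eq[of p q] pq by simp
  then have "pderiv p = 0" by (metis degree_eq_zeroE pderiv_singleton)
  moreover have m0: "map_poly (\<lambda>_. 0) p = 0" by (rule poly_eqI) (simp add: coeff_map_poly)
  have "e0.E p = 0" by (simp only: e0.E_def m0 poly_0)
  ultimately have "e0.dd (iota k) = 0" using e0.dd_poly[OF p(1)] p(2) by simp
  then show ?thesis using dl_R0[OF inR(1)] by simp
qed

end


context cylA begin

lemma E_L: "e \<in> E \<Longrightarrow> iota e \<in> L" using E_ver ver_L by blast

lemma bound: "\<exists>N\<ge>1. \<forall>x\<in>alg_gen K E. iota x \<in> L \<and> (\<exists>b. phi ^ N * dl (iota x) = iota b)"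
proof -
  have "\<forall>e\<in>E. \<exists>b m. dl (iota e) = iota b / phi ^ m" using E_L dl_in L_T by blast
  then obtain bb mm where bm: "\<And>e. e \<in> E \<Longrightarrow> dl (iota e) = iota (bb e) / phi ^ mm e" by metis
  define N where "N = Max (insert 1 (mm ` E))"
  have N1: "N \<ge> 1" unfolding N_def using E_fin by simp
  have mN: "e \<in> E \<Longrightarrow> mm e \<le> N" for e unfolding N_def using E_fin by simp
  have "iota x \<in> L \<and> (\<exists>b. phi ^ N * dl (iota x) = iota b)" if x: "x \<in> alg_gen K E" for x
    using x
  proof (induction rule: alg_gen.induct)
    case (base_K c)
    then show ?case using ver_L[OF K_ver] dl_K by (metis iota_0 mult_zero_right)
  next
    case (base_S e)
    have "phi ^ N * dl (iota e) = iota (bb e * f ^ (N - mm e))"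
    proof -
      have p: "phi ^ N = phi ^ (N - mm e) * phi ^ mm e" using mN[OF base_S] by (simp flip: power_add)
      have q: "phi ^ mm e * dl (iota e) = iota (bb e)" using bm[OF base_S] phi0 by (simp add: divide_simps mult.commute)
      have "phi ^ N * dl (iota e) = phi ^ (N - mm e) * (phi ^ mm e * dl (iota e))" unfolding p by (simp add: algebra_simps)
      also have "\<dots> = iota (bb e * f ^ (N - mm e))" unfolding q by (simp add: algebra_simps)
      finally show ?thesis .
    qed
    then show ?case using E_L base_S by blast
  next
    case (add x y)
    then obtain a b where ab: "phi ^ N * dl (iota x) = iota a" "phi ^ N * dl (iota y) = iota b" by blast
    have "iota (x + y) \<in> L" using add subring_parts(3)[OF L_sub] by simp
    moreover have "phi ^ N * dl (iota (x + y)) = iota (a + b)"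
      using add dl_add ab by (simp add: algebra_simps)
    ultimately show ?case by blast
  next
    case (mult x y)
    then obtain a b where ab: "phi ^ N * dl (iota x) = iota a" "phi ^ N * dl (iota y) = iota b" by blast
    have "iota (x * y) \<in> L" using mult subring_parts(4)[OF L_sub] by simp
    moreover have "phi ^ N * dl (iota (x * y)) = iota (x * b + y * a)"
    proof -
      have "phi ^ N * dl (iota (x * y)) = iota x * (phi ^ N * dl (iota y)) + iota y * (phi ^ N * dl (iota x))"
        using mult dl_mult by (simp add: algebra_simps)
      then show ?thesis using ab by simp
    qed
    ultimately show ?case by blast
  qed
  then show ?thesis using N1 by blast
qed

definition NN where "NN = (SOME N. N \<ge> 1 \<and> (\<forall>x\<in>alg_gen K E. iota x \<in> L \<and> (\<exists>b. phi ^ N * dl (iota x) = iota b)))"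

lemma NN: "NN \<ge> 1" "\<forall>x\<in>alg_gen K E. iota x \<in> L \<and> (\<exists>b. phi ^ NN * dl (iota x) = iota b)"
  using someI_ex[OF bound] unfolding NN_def[symmetric] by blast+

definition DD where "DD x = (SOME b. iota b = phi ^ NN * dl (iota x))"

lemma DD_key: "x \<in> alg_gen K E \<Longrightarrow> iota (DD x) = phi ^ NN * dl (iota x)"
proof -
  assume "x \<in> alg_gen K E"
  then obtain b where "phi ^ NN * dl (iota x) = iota b" using NN by blast
  then show ?thesis unfolding DD_def by (metis (mono_tags) someI)
qed

lemma gen_L: "x \<in> alg_gen K E \<Longrightarrow> iota x \<in> L" using NN by blast

lemma ver_gen: "x \<in> veronese Bg d \<Longrightarrow> x \<in> alg_gen K E" using ver_fg by blast

lemma DD_add: "x \<in> alg_gen K E \<Longrightarrow> y \<in> alg_gen K E \<Longrightarrow> DD (x + y) = DD x + DD y"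
proof -
  assume xy: "x \<in> alg_gen K E" "y \<in> alg_gen K E"
  have "iota (DD (x + y)) = phi ^ NN * dl (iota x + iota y)" using DD_key[OF alg_gen.add[OF xy]] by simp
  also have "\<dots> = iota (DD x) + iota (DD y)" using dl_add[OF gen_L gen_L, OF xy] DD_key xy by (simp add: algebra_simps)
  also have "\<dots> = iota (DD x + DD y)" by simp
  finally show ?thesis by (simp only: iota_inj)
qed

lemma DD_mult: "x \<in> alg_gen K E \<Longrightarrow> y \<in> alg_gen K E \<Longrightarrow> DD (x * y) = x * DD y + y * DD x"
proof -
  assume xy: "x \<in> alg_gen K E" "y \<in> alg_gen K E"
  have "iota (DD (x * y)) = phi ^ NN * dl (iota x * iota y)" using DD_key[OF alg_gen.mult[OF xy]] by simp
  also have "\<dots> = iota x * iota (DD y) + iota y * iota (DD x)" using dl_mult[OF gen_L gen_L, OF xy] DD_key xy by (simp add: algebra_simps)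
  also have "\<dots> = iota (x * DD y + y * DD x)" by simp
  finally show ?thesis by (simp only: iota_inj)
qed

lemma DD_zero: "DD 0 = 0"
proof -
  have "0 \<in> alg_gen K E" using K0' by (simp add: alg_gen.base_K)
  then have "iota (DD 0) = phi ^ NN * dl 0" using DD_key by simp
  then show ?thesis using der_zero[OF L_sub dl_der] by simp
qed

lemma DD_sum: "(\<And>a. a \<in> I \<Longrightarrow> x a \<in> alg_gen K E) \<Longrightarrow> DD (sum x I) = (\<Sum>a\<in>I. DD (x a))"
proof (induction I rule: infinite_finite_induct)
  case (insert a F)
  have sF: "sum x F \<in> alg_gen K E" by (rule alg_gen_sum[OF K0'(1)]) (use insert in auto)
  have xa: "x a \<in> alg_gen K E" using insert by auto
  show ?case using insert DD_add[OF xa sF] by simp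
qed (auto simp: DD_zero)

lemma DD_homog:
  assumes x: "x \<in> Bg g" and g: "g \<in> cyc d"
  shows "DD x \<in> Bg (g + nsm NN d)"
  using g
proof (rule cyc_cases)
  have xg: "x \<in> alg_gen K E" using ver_gen ver_homog[OF x g] by blast
  fix n assume gn: "g = nsm n d"
  define w where "w = iota x / phi ^ n"
  have wR: "w \<in> R0" unfolding w_def using R0_I x gn by blast
  have ix: "iota x = phi ^ n * w" unfolding w_def using phi0 by simp
  have "e0.dd w \<in> R0" using d0_der wR unfolding der_def by blast
  then obtain a m where am: "a \<in> Bg (nsm m d)" "e0.dd w = iota a / phi ^ m" using R0_iota by blast
  have "iota (DD x) = phi ^ NN * (phi ^ n * (iota a / phi ^ m))"
    using DD_key[OF xg] ix dl_mult_phipow[OF R0_L[OF wR]] dl_R0[OF wR] am by simp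
  then have "iota (DD x * f ^ m) = iota (f ^ (NN + n) * a)" using phi0 by (simp add: power_add divide_simps)
  then have "DD x * f ^ m = f ^ (NN + n) * a" by (simp only: iota_inj)
  also have "\<dots> \<in> Bg (nsm (NN + n) d + nsm m d)" by (rule mult_in[OF pow_in am(1)])
  finally have "DD x \<in> Bg (nsm (NN + n) d + nsm m d - nsm m d)" by (rule DEG)
  then show ?thesis using gn by (simp add: nsm_add algebra_simps)
next
  have xg: "x \<in> alg_gen K E" using ver_gen ver_homog[OF x g] by blast
  fix n assume gn: "g = - nsm n d"
  have "x * f ^ n \<in> Bg (nsm 0 d)" using mult_in[OF x pow_in, of n] gn by simp
  then have wR: "iota (x * f ^ n) / phi ^ 0 \<in> R0" using R0_I by blast
  define w where "w = iota (x * f ^ n)"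
  have wR': "w \<in> R0" using wR unfolding w_def by simp
  have ix: "iota x = w / phi ^ n" unfolding w_def using phi0 by simp
  have "e0.dd w \<in> R0" using d0_der wR' unfolding der_def by blast
  then obtain a m where am: "a \<in> Bg (nsm m d)" "e0.dd w = iota a / phi ^ m" using R0_iota by blast
  have "iota (DD x) = phi ^ NN * ((iota a / phi ^ m) / phi ^ n)"
    using DD_key[OF xg] ix dl_div_phipow[OF R0_L[OF wR']] dl_R0[OF wR'] am by simp
  then have "iota (DD x * f ^ (m + n)) = iota (f ^ NN * a)" using phi0 by (simp add: power_add divide_simps)
  then have "DD x * f ^ (m + n) = f ^ NN * a" by (simp only: iota_inj)
  also have "\<dots> \<in> Bg (nsm NN d + nsm m d)" by (rule mult_in[OF pow_in am(1)])
  finally have "DD x \<in> Bg (nsm NN d + nsm m d - nsm (m + n) d)" by (rule DEG)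
  then show ?thesis using gn by (simp add: nsm_add algebra_simps)
qed

lemma DD_ver: assumes x: "x \<in> veronese Bg d" shows "DD x \<in> veronese Bg d"
proof -
  have cg: "comp x i \<in> alg_gen K E" if "comp x i \<noteq> 0" for i
    using ver_gen ver_homog[OF comp_props(2) ver_comp[OF x that]] by blast
  have "DD x = (\<Sum>i\<in>{i. comp x i \<noteq> 0}. DD (comp x i))"
    using DD_sum[of "{i. comp x i \<noteq> 0}" "comp x"] cg ver_decomp[of x] by auto
  also have "\<dots> \<in> veronese Bg d"
  proof (rule ver_sum)
    fix i assume "i \<in> {i. comp x i \<noteq> 0}"
    then have i: "i \<in> cyc d" using ver_comp[OF x] by blast
    show "DD (comp x i) \<in> veronese Bg d"
      by (rule ver_homog[OF DD_homog[OF comp_props(2) i]], rule cyc_add[OF i cyc_nsm])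
  qed
  finally show ?thesis .
qed

lemma DD_iter: "x \<in> veronese Bg d \<Longrightarrow> iota ((DD ^^ n) x) = ((\<lambda>y. phi ^ NN * dl y) ^^ n) (iota x) \<and> (DD ^^ n) x \<in> veronese Bg d"
proof (induction n)
  case (Suc n)
  then show ?case using DD_key[OF ver_gen] DD_ver by simp
qed simp

lemma DD_lnd: "x \<in> veronese Bg d \<Longrightarrow> \<exists>n. (DD ^^ n) x = 0"
proof -
  assume x: "x \<in> veronese Bg d"
  have lnd1: "\<And>z. z \<in> e1.SU \<Longrightarrow> \<exists>n. (e1.dd ^^ n) z = 0"
  proof -
    fix z assume "z \<in> e1.SU"
    show "\<exists>n. (e1.dd ^^ n) z = 0"
    proof (rule e1.lnd_c0)
      show "\<And>w. w \<in> R0 \<Longrightarrow> \<exists>n. (e0.dd ^^ n) w = 0"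
        using e0.lnd_zero R0_SU by auto
    qed (use \<open>z \<in> e1.SU\<close> in auto)
  qed
  obtain n where n: "(dl ^^ n) (iota x) = 0" using e2.dl_lnd[OF lnd1 ver_L[OF x]] by blast
  have "iota ((DD ^^ n) x) = (phi ^ NN) ^ n * (dl ^^ n) (iota x)"
    using DD_iter[OF x] der_funpow_mult_const[OF L_sub dl_der phipow_L dl_phipow ver_L[OF x]] by simp
  then show ?thesis using n by (intro exI[of _ n]) simp
qed

lemma main:
  "\<exists>D. is_derivation_on (veronese Bg d) D
           \<and> locally_nilpotent_on (veronese Bg d) D
           \<and> homogeneous_derivation_on Bg (veronese Bg d) D
           \<and> (\<exists>x\<in>veronese Bg d. D x \<noteq> 0)
           \<and> (\<exists>x\<in>veronese Bg d. D x = 0 \<and> x \<notin> Bg 0)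
           \<and> (\<exists>n\<ge>1. f ^ n \<in> D ` veronese Bg d \<and> D (f ^ n) = 0)"
proof (intro exI[of _ DD] conjI)
  show "is_derivation_on (veronese Bg d) DD"
    unfolding is_derivation_on_def using DD_ver DD_add DD_mult ver_gen by blast
  show "locally_nilpotent_on (veronese Bg d) DD"
    unfolding locally_nilpotent_on_def using DD_lnd by blast
  show "homogeneous_derivation_on Bg (veronese Bg d) DD"
    unfolding homogeneous_derivation_on_def
  proof (intro exI[of _ "nsm NN d"] allI ballI)
    fix i x assume x: "x \<in> Bg i \<inter> veronese Bg d"
    show "DD x \<in> Bg (i + nsm NN d)"
    proof (cases "x = 0")
      case True then show ?thesis using DD_zero by simp
    next
      case False
      then have "i \<in> cyc d" using ver_deg x by blast
      then show ?thesis using DD_homog x by blast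
    qed
  qed
  have fpow_ver: "f ^ n \<in> veronese Bg d" for n using ver_homog[OF pow_in cyc_nsm] .
  have Dfpow: "DD (f ^ n) = 0" for n
  proof -
    have "iota (DD (f ^ n)) = phi ^ NN * dl (phi ^ n)" using DD_key[OF ver_gen[OF fpow_ver]] by simp
    then show ?thesis using dl_phipow by simp
  qed
  obtain a m where am: "a \<in> Bg (nsm m d)" "t = iota a / phi ^ m" using tR0 R0_iota by blast
  have aver: "a \<in> veronese Bg d" using ver_homog[OF am(1) cyc_nsm] .
  have Da: "DD a = f ^ (NN + m)"
  proof -
    have ia: "iota a = phi ^ m * t" using am(2) phi0 by simp
    have "dl t = 1" using dl_R0[OF tR0] e0.dd_u by simp
    then have "iota (DD a) = phi ^ NN * (phi ^ m * 1)"
      using DD_key[OF ver_gen[OF aver]] ia dl_mult_phipow[OF R0_L[OF tR0]] by simp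
    then have "iota (DD a) = iota (f ^ (NN + m))" by (simp add: power_add)
    then show ?thesis by (simp only: iota_inj)
  qed
  have "DD a \<noteq> 0" unfolding Da using f0 by simp
  then show "\<exists>x\<in>veronese Bg d. DD x \<noteq> 0" using aver by blast
  show "\<exists>x\<in>veronese Bg d. DD x = 0 \<and> x \<notin> Bg 0"
  proof (intro bexI[of _ f] conjI)
    show "f \<in> veronese Bg d" using fpow_ver[of 1] by simp
    show "DD f = 0" using Dfpow[of 1] by simp
    show "f \<notin> Bg 0" using homog_disj[OF fd] d_ne0 f0 by blast
  qed
  show "\<exists>n\<ge>1. f ^ n \<in> DD ` veronese Bg d \<and> DD (f ^ n) = 0"
  proof (intro exI[of _ "NN + m"] conjI)
    show "1 \<le> NN + m" using NN(1) by simp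
    show "f ^ (NN + m) \<in> DD ` veronese Bg d" using Da aver by (metis image_eqI)
    show "DD (f ^ (NN + m)) = 0" by (rule Dfpow)
  qed
qed

end

theorem proposition4p6:
  fixes Bg :: "'g::ab_group_add \<Rightarrow> 'b::idom set"
    and K :: "'b set" and f :: "'b" and d :: "'g"
  assumes "is_grading Bg"
    and "is_subfield K"
    and "\<And>n::nat. n > 0 \<Longrightarrow> (of_nat n :: 'b) \<noteq> 0"
    and "K \<subseteq> Bg 0"
    and "finitely_generated_algebra K"
    and "cylindrical Bg f"
    and "f \<in> Bg d"
  shows "\<exists>D. is_derivation_on (veronese Bg d) D
           \<and> locally_nilpotent_on (veronese Bg d) D
           \<and> homogeneous_derivation_on Bg (veronese Bg d) D
           \<and> (\<exists>x\<in>veronese Bg d. D x \<noteq> 0)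
           \<and> (\<exists>x\<in>veronese Bg d. D x = 0 \<and> x \<notin> Bg 0)
           \<and> (\<exists>n\<ge>1. f ^ n \<in> D ` veronese Bg d \<and> D (f ^ n) = 0)"
proof -
  interpret gr Bg using assms(1) by unfold_locales
  have Ksub: "is_subring K" and Kinv: "\<And>x. x \<in> K \<Longrightarrow> x \<noteq> 0 \<Longrightarrow> \<exists>y\<in>K. x * y = 1"
    using assms(2) unfolding is_subfield_def by auto
  have one0: "1 \<in> Bg 0" using assms(4) subring_parts(2)[OF Ksub] by blast
  have f0: "f \<noteq> 0" using assms(6) unfolding cylindrical_def by blast
  obtain d' where d': "f \<in> Bg d'" "infinite_order d'" "poly_ring_one_var (deg0_loc Bg d' f)"
    using assms(6) unfolding cylindrical_def by blast
  have dd: "d' = d" using homog_disj[OF d'(1) assms(7)] f0 by blast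
  obtain S where S: "finite S" "alg_gen K S = UNIV"
    using assms(5) unfolding finitely_generated_algebra_def by blast
  obtain A t where At: "is_subring A" "A \<subseteq> deg0_loc Bg d f" "t \<in> deg0_loc Bg d f"
    "deg0_loc Bg d f = {poly p t | p. \<forall>i. coeff p i \<in> A}"
    "\<And>p. (\<forall>i. coeff p i \<in> A) \<Longrightarrow> poly p t = 0 \<Longrightarrow> p = 0"
    using d'(3) unfolding dd poly_ring_one_var_def by blast
  interpret cylA Bg d f K S A t
    by unfold_locales (use assms(1,4,7) one0 f0 d'(2) dd Ksub S At Kinv in auto)
  show ?thesis by (rule main)
qed

end
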